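(* Let $\mathcal{NCP}$ be the noncrossing gap-insertion operad (defined in the context). For $n\geq 2$ let $p_n=\{[n-1]\}\in\mathcal{NCP}(n)$ be the one-block partition of $[n-1]$. Then the operad $\mathcal{NCP}$ is generated by the elements $p_n$, $n\geq 2$, subject to the relations $$p_m\diamond_m p_n=p_n\diamond_1 p_m\qquad\text{for all } m,n\geq 2.$$ That is, if $\mathcal{Q}$ denotes the quotient of the free non-symmetric set operad on generators $q_n$ of arity $n$ ($n\geq 2$) by the relations $q_m\circ_m q_n=q_n\circ_1 q_m$ ($m,n\geq 2$), then the operad morphism $\mathcal{Q}\to\mathcal{NCP}$ sending $q_n\mapsto p_n$ exists and is an isomorphism.
   Context: A partition of degree $n$ is a set partition of $[n]=\{1,\dots,n\}$ into nonempty blocks (for $n=0$ there is only the empty partition $\emptyset$); partitions of other finite linearly ordered sets are identified with partitions of $[n]$ via the unique order-preserving bijection. A partition is noncrossing if there are no $a<c<b<d$ with $a,b$ in one block and $c,d$ in a different block. The noncrossing gap-insertion operad $\mathcal{NCP}$ is the non-symmetric set operad with $\mathcal{NCP}(0)=\emptyset$ and, for $n\geq 1$, $\mathcal{NCP}(n)$ the set of noncrossing partitions of $[n-1]$ (so a partition of degree $n-1$ has arity $n$, its inputs being the $n$ gaps before, between and after its elements; $\mathcal{NCP}(1)=\{\emptyset\}$ and $\emptyset$ is the unit). The partial composition, for $P=\{\pi_1,\dots,\pi_k\}\in\mathcal{NCP}(m)$, $Q=\{\rho_1,\dots,\rho_l\}\in\mathcal{NCP}(n)$ and $i\in[m]$,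 is $$P\diamond_i Q=\{\chi(\pi_1),\dots,\chi(\pi_k),\rho_1+i-1,\dots,\rho_l+i-1\},$$ where $\chi(p)=p$ if $p<i$ and $\chi(p)=p+n-1$ otherwise (applied elementwise), and $X+c$ denotes the shift of a set $X$ by $c$. (That is, $Q$ is inserted into the $i$-th gap of $P$.) *)

theory Defs
  imports Main "HOL-Library.Disjoint_Sets"
begin

text \<open>An element of NCP(n), n \<ge> 1, is a noncrossing partition of {1..n-1},
  represented as a set of blocks (nat set set). NCP(0) is empty.\<close>

definition noncrossing :: "nat set set \<Rightarrow> bool" where
  "noncrossing P \<longleftrightarrow> (\<forall>B\<in>P. \<forall>C\<in>P. B \<noteq> C \<longrightarrow>
     \<not> (\<exists>a b c d. a < c \<and> c < b \<and> b < d \<and> a \<in> B \<and> b \<in> B \<and> c \<in> C \<and> d \<in> C))"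

definition NCP :: "nat \<Rightarrow> nat set set set" where
  "NCP n = (if n = 0 then {} else {P. partition_on {1..n-1} P \<and> noncrossing P})"

text \<open>Partial composition P \<diamond>_i Q, where n is the arity of Q.\<close>
definition ncp_comp :: "nat set set \<Rightarrow> nat \<Rightarrow> nat \<Rightarrow> nat set set \<Rightarrow> nat set set" where
  "ncp_comp P i n Q =
     (\<lambda>B. (\<lambda>p. if p < i then p else p + n - 1) ` B) ` P \<union> (\<lambda>B. (\<lambda>x. x + i - 1) ` B) ` Q"

definition pgen :: "nat \<Rightarrow> nat set set" where
  "pgen n = {{1..n-1}}"

text \<open>Planar trees: Leaf is the unit; Node n ts is the generator q_n with the
  n subtrees ts grafted onto its inputs.\<close>
datatype ftree = Leaf | Node nat "ftree list"

fun wf_tree :: "ftree \<Rightarrow> bool" where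
  "wf_tree Leaf = True"
| "wf_tree (Node n ts) = (2 \<le> n \<and> length ts = n \<and> (\<forall>t\<in>set ts. wf_tree t))"

fun ar :: "ftree \<Rightarrow> nat" where
  "ar Leaf = 1"
| "ar (Node n ts) = sum_list (map ar ts)"

text \<open>Partial composition t \<circ>_i s: graft s onto the i-th leaf (1-indexed) of t.\<close>
fun graft :: "ftree \<Rightarrow> nat \<Rightarrow> ftree \<Rightarrow> ftree"
and graft_list :: "ftree list \<Rightarrow> nat \<Rightarrow> ftree \<Rightarrow> ftree list" where
  "graft Leaf i s = (if i = 1 then s else Leaf)"
| "graft (Node n ts) i s = Node n (graft_list ts i s)"
| "graft_list [] i s = []"
| "graft_list (t # ts) i s =
     (if i \<le> ar t then graft t i s # ts else t # graft_list ts (i - ar t) s)"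

definition qgen :: "nat \<Rightarrow> ftree" where
  "qgen n = Node n (replicate n Leaf)"

text \<open>The operad congruence on the free operad generated by the relations
  q_m \<circ>_m q_n = q_n \<circ>_1 q_m (m, n \<ge> 2); Q is the quotient by it.\<close>
inductive qrel :: "ftree \<Rightarrow> ftree \<Rightarrow> bool" where
  gen: "2 \<le> m \<Longrightarrow> 2 \<le> n \<Longrightarrow> qrel (graft (qgen m) m (qgen n)) (graft (qgen n) 1 (qgen m))"
| refl: "wf_tree t \<Longrightarrow> qrel t t"
| sym: "qrel t t' \<Longrightarrow> qrel t' t"
| trans: "qrel t t' \<Longrightarrow> qrel t' t'' \<Longrightarrow> qrel t t''"
| comp: "qrel t t' \<Longrightarrow> qrel s s' \<Longrightarrow> 1 \<le> i \<Longrightarrow> i \<le> ar t \<Longrightarrow>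
           qrel (graft t i s) (graft t' i s')"

fun phi :: "ftree \<Rightarrow> nat set set"
and phi_fill :: "nat set set \<Rightarrow> nat \<Rightarrow> ftree list \<Rightarrow> nat set set" where
  "phi Leaf = {}"
| "phi (Node n ts) = phi_fill (pgen n) 1 ts"
| "phi_fill P i [] = P"
| "phi_fill P i (t # ts) = phi_fill (ncp_comp P i (ar t) (phi t)) (i + ar t) ts"

end

theory Submission
  imports Defs
begin

declare if_image_distrib[simp del]

definition sh :: "nat \<Rightarrow> nat set set \<Rightarrow> nat set set" where
  "sh c P = (\<lambda>B. (\<lambda>x. x + c) ` B) ` P"

abbreviation arL :: "ftree list \<Rightarrow> nat" where "arL ts \<equiv> sum_list (map ar ts)"

fun rootset :: "ftree list \<Rightarrow> nat set" where
  "rootset [] = {}"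
| "rootset [t] = {}"
| "rootset (t # t' # ts) = insert (ar t) ((\<lambda>x. x + ar t) ` rootset (t' # ts))"

fun kids :: "ftree list \<Rightarrow> nat set set" where
  "kids [] = {}"
| "kids (t # ts) = phi t \<union> sh (ar t) (kids ts)"

fun gmap :: "nat \<Rightarrow> ftree list \<Rightarrow> nat \<Rightarrow> nat" where
  "gmap i [] p = p"
| "gmap i (t # ts) p = gmap (i + ar t) ts (if p < i then p else p + ar t - 1)"

lemma gmap_low: "p < i \<Longrightarrow> gmap i ts p = p"
  by (induction ts arbitrary: i) auto

lemma sh_0[simp]: "sh 0 P = P" by (simp add: sh_def)
lemma sh_sh: "sh a (sh b P) = sh (a + b) P"
  by (simp add: sh_def image_image add_ac)
lemma sh_Un: "sh c (P \<union> Q) = sh c P \<union> sh c Q" by (simp add: sh_def image_Un)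
lemma sh_empty[simp]: "sh c {} = {}" by (simp add: sh_def)

lemma fill:
  assumes "\<forall>t\<in>set ts. \<forall>B\<in>phi t. \<forall>x\<in>B. x < ar t" "1 \<le> i"
  shows "phi_fill P i ts = (\<lambda>B. gmap i ts ` B) ` P \<union> sh (i-1) (kids ts)"
  using assms
proof (induction ts arbitrary: P i)
  case Nil
  then show ?case by (simp add: image_image)
next
  case (Cons t ts)
  let ?a = "ar t"
  let ?chi = "\<lambda>p. if p < i then p else p + ?a - 1"
  have IH: "phi_fill (ncp_comp P i ?a (phi t)) (i + ?a) ts =
     (\<lambda>B. gmap (i + ?a) ts ` B) ` (ncp_comp P i ?a (phi t)) \<union> sh (i + ?a - 1) (kids ts)"
    using Cons by simp
  have fixp: "(\<lambda>B. gmap (i + ?a) ts ` B) ` sh (i-1) (phi t) = sh (i-1) (phi t)"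
  proof -
    have "\<And>B. B \<in> phi t \<Longrightarrow> gmap (i + ?a) ts ` (\<lambda>x. x + (i-1)) ` B = (\<lambda>x. x + (i-1)) ` B"
    proof -
      fix B assume B: "B \<in> phi t"
      have "\<forall>x\<in>B. x < ?a" using Cons.prems B by auto
      then show "gmap (i + ?a) ts ` (\<lambda>x. x + (i-1)) ` B = (\<lambda>x. x + (i-1)) ` B"
        using Cons.prems(2) by (force simp: image_image gmap_low intro: image_cong)
    qed
    then show ?thesis by (simp add: sh_def image_image cong: image_cong)
  qed
  have "ncp_comp P i ?a (phi t) = (\<lambda>B. ?chi ` B) ` P \<union> sh (i-1) (phi t)"
  proof -
    have "(\<lambda>x. x + i - 1) = (\<lambda>x. x + (i - 1))" using Cons.prems(2) by auto
    then show ?thesis unfolding ncp_comp_def sh_def by (simp only:)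
  qed
  then have "phi_fill (ncp_comp P i ?a (phi t)) (i + ?a) ts =
     (\<lambda>B. gmap (i + ?a) ts ` ?chi ` B) ` P \<union> sh (i-1) (phi t) \<union> sh (i + ?a - 1) (kids ts)"
    using IH fixp by (simp add: image_Un image_image)
  also have "sh (i + ?a - 1) (kids ts) = sh (i-1) (sh ?a (kids ts))"
    using Cons.prems(2) by (simp add: sh_sh)
  finally show ?case by (simp add: sh_Un image_image Un_assoc)
qed

lemma gmap_root:
  "1 \<le> i \<Longrightarrow> gmap i ts ` {i..<i + length ts - 1} = (\<lambda>x. x + (i-1)) ` rootset ts"
proof (induction ts arbitrary: i rule: rootset.induct)
  case 1
  then show ?case by simp
next
  case (2 t)
  then show ?case by simp
next
  case (3 t t' ts)
  let ?a = "ar t"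
  let ?L = "length (t' # ts)"
  let ?chi = "\<lambda>p. if p < i then p else p + ?a - 1"
  have e: "?chi ` {i..<i + ?L} = insert (i + ?a - 1) {i + ?a..<i + ?a + ?L - 1}"
  proof (rule set_eqI, rule iffI)
    fix y assume "y \<in> ?chi ` {i..<i + ?L}"
    then obtain p where p: "p \<in> {i..<i + ?L}" "y = ?chi p" by blast
    then show "y \<in> insert (i + ?a - 1) {i + ?a..<i + ?a + ?L - 1}"
      using 3 by (cases "p = i") auto
  next
    fix y assume y: "y \<in> insert (i + ?a - 1) {i + ?a..<i + ?a + ?L - 1}"
    show "y \<in> ?chi ` {i..<i + ?L}"
    proof (cases "y = i + ?a - 1")
      case True
      then show ?thesis using 3 by (intro image_eqI[of _ _ i]) auto
    next
      case False
      then show ?thesis using y 3 by (intro image_eqI[of _ _ "y + 1 - ?a"]) auto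
    qed
  qed
  have IH: "gmap (i + ?a) (t' # ts) ` {i + ?a..<i + ?a + ?L - 1} = (\<lambda>x. x + (i + ?a - 1)) ` rootset (t' # ts)"
    using 3 by simp
  have "gmap i (t # t' # ts) ` {i..<i + length (t # t' # ts) - 1}
     = gmap (i + ?a) (t' # ts) ` ?chi ` {i..<i + ?L}"
    by (simp add: image_image del: gmap.simps) (simp add: image_image)
  also have "\<dots> = insert (i + ?a - 1) (gmap (i + ?a) (t' # ts) ` {i + ?a..<i + ?a + ?L - 1})"
    unfolding e using 3 by (simp add: gmap_low)
  also have "\<dots> = (\<lambda>x. x + (i-1)) ` rootset (t # t' # ts)"
    unfolding IH using 3 by (auto simp: image_image add_ac)
  finally show ?case .
qed

lemma phi_Node_gen:
  assumes "wf_tree (Node m ts)" "\<forall>t\<in>set ts. \<forall>B\<in>phi t. \<forall>x\<in>B. x < ar t"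
  shows "phi (Node m ts) = insert (rootset ts) (kids ts)"
proof -
  have m: "length ts = m" "m \<ge> 2" using assms(1) by auto
  have "{1..m-1} = {1..<1 + length ts - 1}" using m by auto
  then have "gmap 1 ts ` {1..m-1} = rootset ts" using gmap_root[of 1 ts] by simp
  then show ?thesis using fill[OF assms(2), of 1 "pgen m"] by (simp add: pgen_def)
qed


lemma ivl_eq: "{1..n-1} = {1..<(n::nat)}" by auto
lemma ivl_eq': "{Suc 0..n - Suc 0} = {Suc 0..<(n::nat)}" by auto

lemma arL_ge: "\<forall>t\<in>set ts. 1 \<le> ar t \<Longrightarrow> length ts \<le> arL ts"
  by (induction ts) auto

lemma ar_pos: "wf_tree t \<Longrightarrow> 1 \<le> ar t"
proof (induction t)
  case Leaf
  then show ?case by simp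
next
  case (Node m ts)
  have "\<forall>t\<in>set ts. 1 \<le> ar t"
  proof
    fix t assume t: "t \<in> set ts"
    then have "wf_tree t" using Node.prems by simp
    then show "1 \<le> ar t" using Node.IH t by blast
  qed
  then have "length ts \<le> arL ts" by (rule arL_ge)
  then show ?case using Node.prems by simp
qed

lemma ar_pos'[simp]: "wf_tree t \<Longrightarrow> Suc 0 \<le> ar t"
  using ar_pos by simp

lemma ar_Node_ge2: "wf_tree (Node m ts) \<Longrightarrow> 2 \<le> ar (Node m ts)"
proof -
  assume a: "wf_tree (Node m ts)"
  have "\<forall>t\<in>set ts. 1 \<le> ar t" using a ar_pos by simp
  then have "length ts \<le> arL ts" by (rule arL_ge)
  then show ?thesis using a by simp
qed

lemma rootset_sub: "\<forall>t\<in>set ts. 1 \<le> ar t \<Longrightarrow> rootset ts \<subseteq> {1..<arL ts}"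
proof (induction ts rule: rootset.induct)
  case (3 t t' ts)
  then have "1 \<le> arL (t' # ts)" by simp
  then show ?case using 3 by auto
qed auto

lemma rootset_ne: "2 \<le> length ts \<Longrightarrow> rootset ts \<noteq> {}"
  by (induction ts rule: rootset.induct) auto

definition nc_sep :: "nat set set \<Rightarrow> nat set set \<Rightarrow> bool" where
  "nc_sep A B \<longleftrightarrow> (\<forall>X\<in>A. \<forall>Y\<in>B. \<forall>x\<in>X. \<forall>y\<in>Y. x < y)"

lemma ncD: "noncrossing P \<Longrightarrow> B \<in> P \<Longrightarrow> C \<in> P \<Longrightarrow> B \<noteq> C \<Longrightarrow> a < c \<Longrightarrow> c < b \<Longrightarrow> b < d
   \<Longrightarrow> a \<in> B \<Longrightarrow> b \<in> B \<Longrightarrow> c \<in> C \<Longrightarrow> d \<in> C \<Longrightarrow> False"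
proof -
  assume h: "noncrossing P" "B \<in> P" "C \<in> P" "B \<noteq> C" "a < c" "c < b" "b < d"
     "a \<in> B" "b \<in> B" "c \<in> C" "d \<in> C"
  have "\<forall>B\<in>P. \<forall>C\<in>P. B \<noteq> C \<longrightarrow> \<not> (\<exists>a b c d. a < c \<and> c < b \<and> b < d \<and> a \<in> B \<and> b \<in> B \<and> c \<in> C \<and> d \<in> C)"
    using h(1) by (simp only: noncrossing_def)
  note n = this[rule_format, OF h(2) h(3) h(4)]
  have "\<exists>a b c d. a < c \<and> c < b \<and> b < d \<and> a \<in> B \<and> b \<in> B \<and> c \<in> C \<and> d \<in> C"
    apply (rule exI[of _ a], rule exI[of _ b], rule exI[of _ c], rule exI[of _ d])
    using h(5-11) by blast
  with n show False by contradiction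
qed

lemma ncI: "(\<And>B C a b c d. B \<in> P \<Longrightarrow> C \<in> P \<Longrightarrow> B \<noteq> C \<Longrightarrow> a < c \<Longrightarrow> c < b \<Longrightarrow> b < d
   \<Longrightarrow> a \<in> B \<Longrightarrow> b \<in> B \<Longrightarrow> c \<in> C \<Longrightarrow> d \<in> C \<Longrightarrow> False) \<Longrightarrow> noncrossing P"
  unfolding noncrossing_def
  apply (intro ballI impI notI)
  apply (elim exE conjE)
  apply assumption
  done

lemma noncrossing_Un:
  assumes "noncrossing A" "noncrossing B" "nc_sep A B"
  shows "noncrossing (A \<union> B)"
proof (rule ncI)
  fix X Y a b c d assume X: "X \<in> A \<union> B" and Y: "Y \<in> A \<union> B" and ne: "X \<noteq> Y"
    and abcd: "a < c" "c < b" "b < d" "a \<in> X" "b \<in> X" "c \<in> Y" "d \<in> Y"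
  have sep: "\<And>X Y x y. X \<in> A \<Longrightarrow> Y \<in> B \<Longrightarrow> x \<in> X \<Longrightarrow> y \<in> Y \<Longrightarrow> x < y"
    using assms(3) unfolding nc_sep_def by blast
  show False
  proof (cases "X \<in> A")
    case XA: True
    show False
    proof (cases "Y \<in> A")
      case True show False by (rule ncD[OF assms(1) XA True ne abcd])
    next
      case False then have "Y \<in> B" using Y by blast
      then have "b < c" using sep[OF XA _ abcd(5) abcd(6)] by blast
      then show False using abcd by simp
    qed
  next
    case XB: False
    then have XB: "X \<in> B" using X by blast
    show False
    proof (cases "Y \<in> B")
      case True show False by (rule ncD[OF assms(2) XB True ne abcd])
    next
      case False then have "Y \<in> A" using Y by blast
      then have "c < a" using sep[OF _ XB abcd(6) abcd(4)] by blast
      then show False using abcd by simp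
    qed
  qed
qed

lemma noncrossing_sh:
  assumes "noncrossing P" shows "noncrossing (sh c P)"
proof (rule ncI)
  fix B C a b ca d assume B: "B \<in> sh c P" and C: "C \<in> sh c P" and ne: "B \<noteq> C"
    and abcd: "a < ca" "ca < b" "b < d" "a \<in> B" "b \<in> B" "ca \<in> C" "d \<in> C"
  obtain B' where B': "B' \<in> P" "B = (\<lambda>x. x + c) ` B'" using B by (auto simp: sh_def)
  obtain C' where C': "C' \<in> P" "C = (\<lambda>x. x + c) ` C'" using C by (auto simp: sh_def)
  have ne': "B' \<noteq> C'" using ne B' C' by auto
  obtain a' b' ca' d' where m: "a' \<in> B'" "b' \<in> B'" "ca' \<in> C'" "d' \<in> C'"
     "a = a' + c" "b = b' + c" "ca = ca' + c" "d = d' + c"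
    using B' C' abcd by blast
  have "a' < ca'" "ca' < b'" "b' < d'" using abcd m by simp_all
  then show False using ncD[OF assms B'(1) C'(1) ne'] m(1-4) by blast
qed

lemma noncrossing_insert:
  assumes "noncrossing K" "\<forall>C\<in>K. \<forall>x\<in>C. \<forall>y\<in>C. \<forall>r\<in>R. \<not> (x < r \<and> r < y)"
  shows "noncrossing (insert R K)"
proof (rule ncI)
  fix X Y a b c d assume X: "X \<in> insert R K" and Y: "Y \<in> insert R K" and ne: "X \<noteq> Y"
    and abcd: "a < c" "c < b" "b < d" "a \<in> X" "b \<in> X" "c \<in> Y" "d \<in> Y"
  show False
  proof (cases "X = R")
    case True
    then have YK: "Y \<in> K" using Y ne by auto
    have "b \<in> R" using True abcd by simp
    then show False using assms(2) YK abcd(6,7) abcd(2,3) by blast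
  next
    case XK: False
    then have XK: "X \<in> K" using X by auto
    show False
    proof (cases "Y = R")
      case True
      then have "c \<in> R" using abcd by simp
      then show False using assms(2) XK abcd(4,5) abcd(1,2) by blast
    next
      case False
      then have "Y \<in> K" using Y by auto
      then show False using ncD[OF assms(1) XK _ ne abcd] by blast
    qed
  qed
qed

lemma partition_on_Un:
  assumes "partition_on A P" "partition_on B Q" "A \<inter> B = {}"
  shows "partition_on (A \<union> B) (P \<union> Q)"
proof (rule partition_onI)
  show "\<Union>(P \<union> Q) = A \<union> B" using assms(1,2) by (auto simp: partition_on_def)
  show "{} \<notin> P \<union> Q" using assms(1,2) by (auto simp: partition_on_def)
  fix p q assume pq: "p \<in> P \<union> Q" "q \<in> P \<union> Q" "p \<noteq> q"
  have dP: "disjoint P" and dQ: "disjoint Q" using assms(1,2) by (auto simp: partition_on_def)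
  have sP: "\<forall>p\<in>P. p \<subseteq> A" and sQ: "\<forall>q\<in>Q. q \<subseteq> B" using assms(1,2) by (auto simp: partition_on_def)
  show "disjnt p q"
  proof (cases "p \<in> P")
    case True
    then show ?thesis
    proof (cases "q \<in> P")
      case True then show ?thesis using dP \<open>p \<in> P\<close> pq(3) by (auto simp: pairwise_def)
    next
      case False then have "q \<in> Q" using pq by auto
      then show ?thesis using sP sQ \<open>p \<in> P\<close> assms(3) unfolding disjnt_def by blast
    qed
  next
    case False then have p: "p \<in> Q" using pq by auto
    then show ?thesis
    proof (cases "q \<in> Q")
      case True then show ?thesis using dQ p pq(3) by (auto simp: pairwise_def)
    next
      case False then have "q \<in> P" using pq by auto
      then show ?thesis using sP sQ p assms(3) unfolding disjnt_def by blast
    qed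
  qed
qed

lemma partition_on_sh:
  assumes "partition_on A P" shows "partition_on ((\<lambda>x. x + c) ` A) (sh c P)"
proof -
  have "partition_on ((\<lambda>x. x + c) ` A) ((`) (\<lambda>x. x + c) ` P - {{}})"
    by (rule partition_on_inj_image[OF assms]) (auto simp: inj_on_def)
  moreover have "(`) (\<lambda>x. x + c) ` P - {{}} = sh c P"
    using partition_onD3[OF assms] by (auto simp: sh_def)
  ultimately show ?thesis by simp
qed

lemma NCP_D: "P \<in> NCP n \<Longrightarrow> 1 \<le> n \<Longrightarrow> partition_on {1..<n} P \<and> noncrossing P"
  by (simp add: NCP_def ivl_eq ivl_eq')

lemma img_add: "(a::nat) \<le> y \<Longrightarrow> y \<in> (\<lambda>x. x + a) ` S \<longleftrightarrow> y - a \<in> S"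
  by (auto simp: image_iff intro!: bexI[of _ "y - a"])

lemma list_inv:
  assumes "\<forall>t\<in>set ts. phi t \<in> NCP (ar t) \<and> 1 \<le> ar t"
  shows "partition_on ({1..<arL ts} - rootset ts) (kids ts)
    \<and> (\<forall>C\<in>kids ts. \<forall>x\<in>C. \<forall>y\<in>C. \<forall>r\<in>rootset ts. \<not> (x < r \<and> r < y))
    \<and> noncrossing (kids ts)"
  using assms
proof (induction ts rule: rootset.induct)
  case 1
  then show ?case by (simp add: partition_on_empty noncrossing_def)
next
  case (2 t)
  then show ?case by (auto dest: NCP_D)
next
  case (3 t t' ts)
  let ?a = "ar t" let ?L = "arL (t' # ts)" let ?R = "rootset (t' # ts)" let ?K = "kids (t' # ts)"
  have IH: "partition_on ({1..<?L} - ?R) ?K"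
     "\<forall>C\<in>?K. \<forall>x\<in>C. \<forall>y\<in>C. \<forall>r\<in>?R. \<not> (x < r \<and> r < y)" "noncrossing ?K"
    using 3 by auto
  have t: "partition_on {1..<?a} (phi t)" "noncrossing (phi t)" "1 \<le> ?a"
    using 3(2) by (auto dest: NCP_D)
  have L1: "1 \<le> ?L" using 3(2) by simp
  have Ksub: "\<forall>C\<in>?K. C \<subseteq> {1..<?L}" using partition_onD1[OF IH(1)] by auto
  have tsub: "\<forall>C\<in>phi t. C \<subseteq> {1..<?a}" using partition_onD1[OF t(1)] by auto
  have Rsub: "?R \<subseteq> {1..<?L}" using 3(2) by (intro rootset_sub) simp
  have U: "{1..<arL (t # t' # ts)} - rootset (t # t' # ts)
      = {1..<?a} \<union> (\<lambda>x. x + ?a) ` ({1..<?L} - ?R)"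
  proof (rule set_eqI)
    fix y
    show "y \<in> {1..<arL (t # t' # ts)} - rootset (t # t' # ts) \<longleftrightarrow>
          y \<in> {1..<?a} \<union> (\<lambda>x. x + ?a) ` ({1..<?L} - ?R)"
    proof (cases "y < ?a")
      case True
      then show ?thesis using Rsub by auto
    next
      case False
      then have ay: "?a \<le> y" by simp
      show ?thesis using ay by (auto simp: img_add)
    qed
  qed
  have kk: "kids (t # t' # ts) = phi t \<union> sh ?a ?K" by simp
  have part: "partition_on ({1..<arL (t # t' # ts)} - rootset (t # t' # ts)) (kids (t # t' # ts))"
    unfolding U kk
    by (rule partition_on_Un[OF t(1) partition_on_sh[OF IH(1)]]) auto
  have sep: "nc_sep (phi t) (sh ?a ?K)"
    using tsub Ksub unfolding nc_sep_def sh_def by fastforce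
  have nc: "noncrossing (kids (t # t' # ts))"
    using noncrossing_Un[OF t(2) noncrossing_sh[OF IH(3)] sep] by simp
  have between: "\<forall>C\<in>kids (t # t' # ts). \<forall>x\<in>C. \<forall>y\<in>C. \<forall>r\<in>rootset (t # t' # ts). \<not> (x < r \<and> r < y)"
  proof (intro ballI notI)
    fix C x y r assume C: "C \<in> kids (t # t' # ts)" and xy: "x \<in> C" "y \<in> C"
      and r: "r \<in> rootset (t # t' # ts)" and btw: "x < r \<and> r < y"
    have r': "r = ?a \<or> (\<exists>r'\<in>?R. r = r' + ?a)" using r by auto
    show False
    proof (cases "C \<in> phi t")
      case True
      then have "C \<subseteq> {1..<?a}" using tsub by blast
      then have "y < ?a" using xy by auto
      then show False using r' btw by auto
    next
      case False
      then obtain C' where C': "C' \<in> ?K" "C = (\<lambda>x. x + ?a) ` C'" using C by (auto simp: sh_def)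
      then obtain x' y' where "x' \<in> C'" "y' \<in> C'" "x = x' + ?a" "y = y' + ?a" using xy by blast
      moreover have "C' \<subseteq> {1..<?L}" using Ksub C'(1) by blast
      then have "1 \<le> x'" using \<open>x' \<in> C'\<close> by auto
      ultimately show False using r' btw IH(2) C' by fastforce
    qed
  qed
  show ?case using part nc between by blast
qed

lemma phi_NCP: "wf_tree t \<Longrightarrow> phi t \<in> NCP (ar t)"
proof (induction t)
  case Leaf
  then show ?case by (simp add: NCP_def partition_on_empty noncrossing_def)
next
  case (Node m ts)
  have ch: "\<forall>t\<in>set ts. phi t \<in> NCP (ar t) \<and> 1 \<le> ar t" using Node by (auto simp: ar_pos)
  have bnd: "\<forall>t\<in>set ts. \<forall>B\<in>phi t. \<forall>x\<in>B. x < ar t"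
  proof (intro ballI)
    fix t B x assume "t \<in> set ts" "B \<in> phi t" "x \<in> B"
    then show "x < ar t" using ch partition_onD1[OF conjunct1[OF NCP_D]] by fastforce
  qed
  have eq: "phi (Node m ts) = insert (rootset ts) (kids ts)" by (rule phi_Node_gen[OF Node.prems bnd])
  have LI: "partition_on ({1..<arL ts} - rootset ts) (kids ts)"
    "\<forall>C\<in>kids ts. \<forall>x\<in>C. \<forall>y\<in>C. \<forall>r\<in>rootset ts. \<not> (x < r \<and> r < y)" "noncrossing (kids ts)"
    using list_inv[OF ch] by auto
  have R: "rootset ts \<subseteq> {1..<arL ts}" "rootset ts \<noteq> {}"
    using rootset_sub rootset_ne ch Node.prems by auto
  have "disjnt (rootset ts) (\<Union>(kids ts))" using partition_onD1[OF LI(1)] by (auto simp: disjnt_def)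
  then have "partition_on {1..<arL ts} (insert (rootset ts) (kids ts))"
    using partition_on_insert LI(1) R by (metis Diff_partition)
  moreover have "noncrossing (insert (rootset ts) (kids ts))"
    using noncrossing_insert LI by blast
  ultimately have "phi (Node m ts) \<in> {P. partition_on {1..arL ts - 1} P \<and> noncrossing P}"
    unfolding ivl_eq using eq by simp
  moreover have "\<exists>n\<in>set ts. 0 < ar n"
  proof -
    have "ts \<noteq> []" using Node.prems by auto
    then have "hd ts \<in> set ts" by simp
    moreover have "\<forall>t\<in>set ts. 0 < ar t" using ch by fastforce
    ultimately show ?thesis by blast
  qed
  ultimately show ?case unfolding NCP_def by simp
qed

lemma phi_bound: "wf_tree t \<Longrightarrow> B \<in> phi t \<Longrightarrow> x \<in> B \<Longrightarrow> 1 \<le> x \<and> x < ar t"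
  using phi_NCP[of t] ar_pos[of t] partition_onD1[OF conjunct1[OF NCP_D]] by fastforce

lemma phi_Node:
  assumes "wf_tree (Node m ts)"
  shows "phi (Node m ts) = insert (rootset ts) (kids ts)"
  using assms phi_bound by (intro phi_Node_gen) auto


lemma length_graft_list: "length (graft_list ts i s) = length ts"
  by (induction ts arbitrary: i) auto

lemma set_graft_list: "u \<in> set (graft_list ts i s) \<Longrightarrow> u \<in> set ts \<or> (\<exists>t\<in>set ts. \<exists>j. u = graft t j s)"
  by (induction ts arbitrary: i) (auto split: if_splits)

lemma wf_graft: "wf_tree t \<Longrightarrow> wf_tree s \<Longrightarrow> wf_tree (graft t i s)"
proof (induction t arbitrary: i)
  case Leaf
  then show ?case by simp
next
  case (Node m ts)
  have "\<forall>u\<in>set (graft_list ts i s). wf_tree u"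
  proof
    fix u assume "u \<in> set (graft_list ts i s)"
    then show "wf_tree u" using set_graft_list Node by fastforce
  qed
  then show ?case using Node.prems length_graft_list by simp
qed

lemma arL_graft_list:
  "\<forall>t\<in>set ts. \<forall>j. 1 \<le> j \<and> j \<le> ar t \<longrightarrow> ar (graft t j s) = ar t + ar s - 1 \<Longrightarrow>
   1 \<le> i \<Longrightarrow> i \<le> arL ts \<Longrightarrow> arL (graft_list ts i s) = arL ts + ar s - 1"
proof (induction ts arbitrary: i)
  case Nil
  then show ?case by simp
next
  case (Cons t ts)
  show ?case
  proof (cases "i \<le> ar t")
    case True
    then have "ar (graft t i s) = ar t + ar s - 1" using Cons.prems by simp
    then show ?thesis using True Cons.prems by simp
  next
    case False
    then have "arL (graft_list ts (i - ar t) s) = arL ts + ar s - 1" using Cons by simp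
    then show ?thesis using False Cons.prems by simp
  qed
qed

lemma ar_graft: "1 \<le> i \<Longrightarrow> i \<le> ar t \<Longrightarrow> ar (graft t i s) = ar t + ar s - 1"
proof (induction t arbitrary: i)
  case Leaf
  then show ?case by simp
next
  case (Node m ts)
  have "\<forall>t\<in>set ts. \<forall>j. 1 \<le> j \<and> j \<le> ar t \<longrightarrow> ar (graft t j s) = ar t + ar s - 1"
    using Node.IH by blast
  then show ?case using arL_graft_list Node.prems by simp
qed

definition chi :: "nat \<Rightarrow> nat \<Rightarrow> nat \<Rightarrow> nat" where
  "chi i n p = (if p < i then p else p + n - 1)"

lemma ncp_comp_alt: "1 \<le> i \<Longrightarrow> ncp_comp P i n Q = (`) (chi i n) ` P \<union> sh (i-1) Q"
proof -
  assume "1 \<le> i"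
  then have "(\<lambda>x. x + i - 1) = (\<lambda>x. x + (i - 1))" by auto
  then show ?thesis unfolding ncp_comp_def sh_def chi_def by (simp only:)
qed

lemma rootset_Cons: "us \<noteq> [] \<Longrightarrow> rootset (t # us) = insert (ar t) ((\<lambda>x. x + ar t) ` rootset us)"
  by (cases us) auto

lemma img_cong2: "(\<And>B x. B \<in> P \<Longrightarrow> x \<in> B \<Longrightarrow> f x = g x) \<Longrightarrow> (\<lambda>B. f ` B) ` P = (\<lambda>B. g ` B) ` P"
  by (rule image_cong) (auto intro: image_cong)

lemma kids_bound:
  assumes "\<forall>t\<in>set ts. wf_tree t" "B \<in> kids ts" "x \<in> B"
  shows "1 \<le> x \<and> x < arL ts"
proof -
  have "\<forall>t\<in>set ts. phi t \<in> NCP (ar t) \<and> 1 \<le> ar t" using assms(1) phi_NCP ar_pos by blast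
  then have "partition_on ({1..<arL ts} - rootset ts) (kids ts)" using list_inv by blast
  then show ?thesis using assms(2,3) partition_onD1 by fastforce
qed

lemma rootset_graft:
  assumes "\<forall>t\<in>set ts. wf_tree t" "wf_tree s" "1 \<le> i" "i \<le> arL ts"
  shows "rootset (graft_list ts i s) = chi i (ar s) ` rootset ts"
  using assms
proof (induction ts arbitrary: i rule: rootset.induct)
  case 1
  then show ?case by simp
next
  case (2 t)
  then show ?case by simp
next
  case (3 t t' ts)
  let ?a = "ar t" let ?n = "ar s"
  have n1: "1 \<le> ?n" using 3(3) by (rule ar_pos)
  show ?case
  proof (cases "i \<le> ?a")
    case True
    have ag: "ar (graft t i s) = ?a + ?n - 1" using ar_graft[OF 3(4) True] .
    have "rootset (graft_list (t # t' # ts) i s) = insert (?a + ?n - 1) ((\<lambda>x. x + (?a + ?n - 1)) ` rootset (t' # ts))"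
      using True ag by simp
    also have "\<dots> = insert (chi i ?n ?a) ((\<lambda>x. chi i ?n (x + ?a)) ` rootset (t' # ts))"
    proof -
      have "chi i ?n ?a = ?a + ?n - 1" using True by (simp add: chi_def)
      moreover have "(\<lambda>x. x + (?a + ?n - 1)) ` rootset (t' # ts) = (\<lambda>x. chi i ?n (x + ?a)) ` rootset (t' # ts)"
        using True n1 by (intro image_cong) (auto simp: chi_def)
      ultimately show ?thesis by simp
    qed
    also have "\<dots> = chi i ?n ` rootset (t # t' # ts)"
      by (simp add: image_image)
    finally show ?thesis .
  next
    case False
    have IH: "rootset (graft_list (t' # ts) (i - ?a) s) = chi (i - ?a) ?n ` rootset (t' # ts)"
      using 3 False by simp
    have ne: "graft_list (t' # ts) (i - ?a) s \<noteq> []"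
      using length_graft_list[of "t' # ts" "i - ?a" s] by auto
    have "rootset (graft_list (t # t' # ts) i s) = rootset (t # graft_list (t' # ts) (i - ?a) s)"
      using False by simp
    also have "\<dots> = insert ?a ((\<lambda>x. x + ?a) ` chi (i - ?a) ?n ` rootset (t' # ts))"
      using rootset_Cons[OF ne] IH by simp
    also have "\<dots> = insert (chi i ?n ?a) ((\<lambda>x. chi i ?n (x + ?a)) ` rootset (t' # ts))"
    proof -
      have "chi i ?n ?a = ?a" using False by (simp add: chi_def)
      moreover have "(\<lambda>x. x + ?a) ` chi (i - ?a) ?n ` rootset (t' # ts) = (\<lambda>x. chi i ?n (x + ?a)) ` rootset (t' # ts)"
        unfolding image_image using False n1 by (intro image_cong) (auto simp: chi_def)
      ultimately show ?thesis by simp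
    qed
    also have "\<dots> = chi i ?n ` rootset (t # t' # ts)"
      by (simp add: image_image)
    finally show ?thesis .
  qed
qed

lemma kids_graft:
  assumes "\<forall>t\<in>set ts. wf_tree t" "wf_tree s" "1 \<le> i" "i \<le> arL ts"
    and IH: "\<forall>t\<in>set ts. \<forall>i. 1 \<le> i \<and> i \<le> ar t \<longrightarrow>
        phi (graft t i s) = (`) (chi i (ar s)) ` phi t \<union> sh (i-1) (phi s)"
  shows "kids (graft_list ts i s) = (`) (chi i (ar s)) ` kids ts \<union> sh (i-1) (phi s)"
  using assms
proof (induction ts arbitrary: i)
  case Nil
  then show ?case by simp
next
  case (Cons t ts)
  let ?a = "ar t" let ?n = "ar s"
  have n1: "1 \<le> ?n" using Cons.prems(2) by (rule ar_pos)
  have wts: "\<forall>t\<in>set ts. wf_tree t" using Cons.prems(1) by simp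
  show ?case
  proof (cases "i \<le> ?a")
    case True
    have ag: "ar (graft t i s) = ?a + ?n - 1" using ar_graft[OF Cons.prems(3) True] .
    have pg: "phi (graft t i s) = (`) (chi i ?n) ` phi t \<union> sh (i-1) (phi s)"
    proof -
      have "\<forall>i. 1 \<le> i \<and> i \<le> ?a \<longrightarrow> phi (graft t i s) = (`) (chi i ?n) ` phi t \<union> sh (i-1) (phi s)"
        using Cons.prems(5) by simp
      then show ?thesis using Cons.prems(3) True by blast
    qed
    have sk: "(`) (chi i ?n) ` sh ?a (kids ts) = sh (?a + ?n - 1) (kids ts)"
    proof -
      have "(`) (chi i ?n) ` sh ?a (kids ts) = (\<lambda>B. (\<lambda>x. chi i ?n (x + ?a)) ` B) ` kids ts"
        by (simp add: sh_def image_image)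
      also have "\<dots> = (\<lambda>B. (\<lambda>x. x + (?a + ?n - 1)) ` B) ` kids ts"
      proof (rule img_cong2)
        fix B x assume "B \<in> kids ts" "x \<in> B"
        then have "1 \<le> x" using kids_bound[OF wts] by blast
        then show "chi i ?n (x + ?a) = x + (?a + ?n - 1)" using True n1 by (simp add: chi_def)
      qed
      finally show ?thesis by (simp add: sh_def)
    qed
    have "kids (graft_list (t # ts) i s) = phi (graft t i s) \<union> sh (?a + ?n - 1) (kids ts)"
      using True ag by simp
    also have "\<dots> = (`) (chi i ?n) ` kids (t # ts) \<union> sh (i-1) (phi s)"
    proof -
      have "(`) (chi i ?n) ` kids (t # ts) = (`) (chi i ?n) ` phi t \<union> sh (?a + ?n - 1) (kids ts)"
        by (simp only: kids.simps image_Un sk)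
      then show ?thesis unfolding pg by (simp only: Un_ac)
    qed
    finally show ?thesis .
  next
    case False
    have b: "1 \<le> i - ?a" "i - ?a \<le> arL ts" using False Cons.prems(4) by auto
    have IHts: "\<forall>t\<in>set ts. \<forall>i. 1 \<le> i \<and> i \<le> ar t \<longrightarrow>
        phi (graft t i s) = (`) (chi i (ar s)) ` phi t \<union> sh (i-1) (phi s)"
      using Cons.prems(5) by simp
    have IH': "kids (graft_list ts (i - ?a) s) = (`) (chi (i - ?a) ?n) ` kids ts \<union> sh (i - ?a - 1) (phi s)"
      by (rule Cons.IH[OF wts Cons.prems(2) b IHts])
    have p1: "(`) (chi i ?n) ` phi t = phi t"
    proof -
      have "(\<lambda>B. chi i ?n ` B) ` phi t = (\<lambda>B. id ` B) ` phi t"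
      proof (rule img_cong2)
        fix B x assume "B \<in> phi t" "x \<in> B"
        then have "x < ?a" using phi_bound Cons.prems by auto
        then show "chi i ?n x = id x" using False by (simp add: chi_def)
      qed
      then show ?thesis by simp
    qed
    have p2: "sh ?a ((`) (chi (i - ?a) ?n) ` kids ts) = (`) (chi i ?n) ` sh ?a (kids ts)"
    proof -
      have "sh ?a ((`) (chi (i - ?a) ?n) ` kids ts) = (\<lambda>B. (\<lambda>x. chi (i - ?a) ?n x + ?a) ` B) ` kids ts"
        by (simp add: sh_def image_image)
      also have "\<dots> = (\<lambda>B. (\<lambda>x. chi i ?n (x + ?a)) ` B) ` kids ts"
        by (rule img_cong2) (use False n1 in \<open>auto simp: chi_def\<close>)
      also have "\<dots> = (`) (chi i ?n) ` sh ?a (kids ts)"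
        by (simp add: sh_def image_image)
      finally show ?thesis .
    qed
    have p3: "sh ?a (sh (i - ?a - 1) (phi s)) = sh (i - 1) (phi s)"
      using False by (simp add: sh_sh)
    have "kids (graft_list (t # ts) i s) = phi t \<union> sh ?a (kids (graft_list ts (i - ?a) s))"
      using False by simp
    also have "\<dots> = (`) (chi i ?n) ` kids (t # ts) \<union> sh (i-1) (phi s)"
    proof -
      have "(`) (chi i ?n) ` kids (t # ts) = phi t \<union> (`) (chi i ?n) ` sh ?a (kids ts)"
        by (simp only: kids.simps image_Un p1)
      then show ?thesis unfolding IH' sh_Un p2 p3 by (simp only: Un_ac)
    qed
    finally show ?thesis .
  qed
qed

lemma phi_graft0:
  "wf_tree t \<Longrightarrow> wf_tree s \<Longrightarrow> 1 \<le> i \<Longrightarrow> i \<le> ar t \<Longrightarrow>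
   phi (graft t i s) = (`) (chi i (ar s)) ` phi t \<union> sh (i-1) (phi s)"
proof (induction t arbitrary: i)
  case Leaf
  then have "(\<lambda>x. x + (i - 1)) = id" by auto
  then show ?case using Leaf by (simp add: sh_def)
next
  case (Node m ts)
  have wts: "\<forall>t\<in>set ts. wf_tree t" using Node.prems by simp
  have wg: "wf_tree (Node m (graft_list ts i s))" using wf_graft[OF Node.prems(1,2)] by simp
  have IH: "\<forall>t\<in>set ts. \<forall>i. 1 \<le> i \<and> i \<le> ar t \<longrightarrow>
        phi (graft t i s) = (`) (chi i (ar s)) ` phi t \<union> sh (i-1) (phi s)"
    using Node.IH wts Node.prems(2) by blast
  have "phi (graft (Node m ts) i s) = insert (rootset (graft_list ts i s)) (kids (graft_list ts i s))"
    using phi_Node[OF wg] by simp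
  also have "\<dots> = insert (chi i (ar s) ` rootset ts) ((`) (chi i (ar s)) ` kids ts \<union> sh (i-1) (phi s))"
    using rootset_graft[OF wts Node.prems(2-3)] kids_graft[OF wts Node.prems(2-3) _ IH] Node.prems(4) by simp
  also have "\<dots> = (`) (chi i (ar s)) ` phi (Node m ts) \<union> sh (i-1) (phi s)"
    using phi_Node[OF Node.prems(1)] by simp
  finally show ?case .
qed

lemma phi_graft:
  "wf_tree t \<Longrightarrow> wf_tree s \<Longrightarrow> 1 \<le> i \<Longrightarrow> i \<le> ar t \<Longrightarrow>
   phi (graft t i s) = ncp_comp (phi t) i (ar s) (phi s)"
  using phi_graft0 ncp_comp_alt by simp


fun nn :: "ftree \<Rightarrow> nat" where
  "nn Leaf = 0"
| "nn (Node n ts) = Suc (sum_list (map nn ts))"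

lemma nnL_graft_list:
  "\<forall>t\<in>set ts. \<forall>j. 1 \<le> j \<and> j \<le> ar t \<longrightarrow> nn (graft t j s) = nn t + nn s \<Longrightarrow>
   1 \<le> i \<Longrightarrow> i \<le> arL ts \<Longrightarrow> sum_list (map nn (graft_list ts i s)) = sum_list (map nn ts) + nn s"
proof (induction ts arbitrary: i)
  case Nil
  then show ?case by simp
next
  case (Cons t ts)
  show ?case
  proof (cases "i \<le> ar t")
    case True
    then have "nn (graft t i s) = nn t + nn s" using Cons.prems by simp
    then show ?thesis using True by simp
  next
    case False
    then have "sum_list (map nn (graft_list ts (i - ar t) s)) = sum_list (map nn ts) + nn s" using Cons by simp
    then show ?thesis using False by simp
  qed
qed

lemma nn_graft: "1 \<le> i \<Longrightarrow> i \<le> ar t \<Longrightarrow> nn (graft t i s) = nn t + nn s"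
proof (induction t arbitrary: i)
  case Leaf
  then show ?case by simp
next
  case (Node m ts)
  have "\<forall>t\<in>set ts. \<forall>j. 1 \<le> j \<and> j \<le> ar t \<longrightarrow> nn (graft t j s) = nn t + nn s"
    using Node.IH by blast
  then show ?case using nnL_graft_list Node.prems by simp
qed

lemma ar_qgen[simp]: "ar (qgen n) = n"
  by (simp add: qgen_def map_replicate_const sum_list_replicate)

lemma nn_qgen[simp]: "nn (qgen n) = 1"
  by (simp add: qgen_def map_replicate_const sum_list_replicate)

lemma wf_qgen: "2 \<le> n \<Longrightarrow> wf_tree (qgen n)"
  by (simp add: qgen_def)

lemma qrel_inv: "qrel t t' \<Longrightarrow> wf_tree t \<and> wf_tree t' \<and> ar t = ar t' \<and> nn t = nn t'"
proof (induction rule: qrel.induct)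
  case (gen m n)
  have w: "wf_tree (qgen m)" "wf_tree (qgen n)" using gen wf_qgen by auto
  have "ar (graft (qgen m) m (qgen n)) = m + n - 1" using ar_graft[of m "qgen m" "qgen n"] gen by simp
  moreover have "ar (graft (qgen n) 1 (qgen m)) = m + n - 1" using ar_graft[of 1 "qgen n" "qgen m"] gen by simp
  moreover have "nn (graft (qgen m) m (qgen n)) = 2" using nn_graft[of m "qgen m" "qgen n"] gen by simp
  moreover have "nn (graft (qgen n) 1 (qgen m)) = 2" using nn_graft[of 1 "qgen n" "qgen m"] gen by simp
  ultimately show ?case using wf_graft w by simp
next
  case (refl t)
  then show ?case by simp
next
  case (sym t t')
  then show ?case by simp
next
  case (trans t t' t'')
  then show ?case by simp
next
  case (comp t t' s s' i)
  then show ?case using wf_graft ar_graft nn_graft by simp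
qed

lemma rootset_leaves: "rootset (replicate n Leaf) = {1..<n}"
proof (induction n)
  case 0
  then show ?case by simp
next
  case (Suc n)
  show ?case
  proof (cases "n = 0")
    case True
    then show ?thesis by simp
  next
    case False
    then have "rootset (replicate (Suc n) Leaf) = insert 1 ((\<lambda>x. x + 1) ` {1..<n})"
      using rootset_Cons[of "replicate n Leaf" Leaf] Suc by simp
    also have "\<dots> = {1..<Suc n}" using False by auto
    finally show ?thesis .
  qed
qed

lemma kids_leaves: "kids (replicate n Leaf) = {}"
  by (induction n) auto

lemma phi_qgen: "2 \<le> n \<Longrightarrow> phi (qgen n) = pgen n"
proof -
  assume n: "2 \<le> n"
  have "phi (qgen n) = insert (rootset (replicate n Leaf)) (kids (replicate n Leaf))"
    using phi_Node wf_qgen[OF n] unfolding qgen_def by blast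
  then show ?thesis by (simp add: rootset_leaves kids_leaves pgen_def ivl_eq ivl_eq')
qed

lemma pgen_alt: "pgen n = {{1..<n}}" by (simp add: pgen_def ivl_eq ivl_eq')

lemma sh_single: "sh c {A} = {(\<lambda>x. x + c) ` A}" by (simp add: sh_def)

lemma gen_eq:
  assumes "2 \<le> m" "2 \<le> n"
  shows "ncp_comp (pgen m) m n (pgen n) = ncp_comp (pgen n) 1 m (pgen m)"
proof -
  have c1: "chi m n ` {1..<m} = {1..<m}"
  proof -
    have "chi m n ` {1..<m} = id ` {1..<m}" by (rule image_cong) (auto simp: chi_def)
    then show ?thesis by simp
  qed
  have s1: "(\<lambda>x. x + (m - 1)) ` {1..<n} = {m..<m + n - 1}"
  proof -
    have "(\<lambda>x. x + (m - 1)) ` {1..<n} = {1 + (m - 1)..<n + (m - 1)}"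
      by (rule image_add_atLeastLessThan')
    also have "\<dots> = {m..<m + n - 1}" using assms by (simp add: algebra_simps)
    finally show ?thesis .
  qed
  have "ncp_comp (pgen m) m n (pgen n) = {chi m n ` {1..<m}} \<union> sh (m - 1) {{1..<n}}"
    using assms by (simp add: ncp_comp_alt pgen_alt)
  also have "\<dots> = {{1..<m}, {m..<m + n - 1}}"
    unfolding c1 sh_single s1 by auto
  finally have l: "ncp_comp (pgen m) m n (pgen n) = {{1..<m}, {m..<m + n - 1}}" .
  have "chi 1 m ` {1..<n} = (\<lambda>x. x + (m - 1)) ` {1..<n}"
    using assms by (intro image_cong) (auto simp: chi_def)
  then have c2: "chi 1 m ` {1..<n} = {m..<m + n - 1}" using s1 by simp
  have "ncp_comp (pgen n) 1 m (pgen m) = {chi 1 m ` {1..<n}} \<union> sh 0 {{1..<m}}"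
    by (simp add: ncp_comp_alt pgen_alt)
  also have "\<dots> = {{m..<m + n - 1}, {1..<m}}"
    unfolding c2 sh_0 by blast
  finally have r: "ncp_comp (pgen n) 1 m (pgen m) = {{m..<m + n - 1}, {1..<m}}" .
  show ?thesis unfolding l r by (rule insert_commute)
qed

lemma phi_qrel: "qrel t t' \<Longrightarrow> phi t = phi t'"
proof (induction rule: qrel.induct)
  case (gen m n)
  have w: "wf_tree (qgen m)" "wf_tree (qgen n)" using gen wf_qgen by auto
  have "phi (graft (qgen m) m (qgen n)) = ncp_comp (pgen m) m n (pgen n)"
    using phi_graft[OF w(1) w(2), of m] gen phi_qgen by simp
  moreover have "phi (graft (qgen n) 1 (qgen m)) = ncp_comp (pgen n) 1 m (pgen m)"
    using phi_graft[OF w(2) w(1), of 1] gen phi_qgen by simp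
  ultimately show ?case using gen_eq gen by simp
next
  case (refl t)
  then show ?case by simp
next
  case (sym t t')
  then show ?case by simp
next
  case (trans t t' t'')
  then show ?case by simp
next
  case (comp t t' s s' i)
  have i1: "qrel t t'" "qrel s s'" by fact+
  note a = qrel_inv[OF i1(1)] qrel_inv[OF i1(2)]
  have "phi (graft t i s) = ncp_comp (phi t) i (ar s) (phi s)"
    using phi_graft a comp by simp
  moreover have "phi (graft t' i s') = ncp_comp (phi t') i (ar s') (phi s')"
    using phi_graft a comp by simp
  ultimately show ?case using comp a by simp
qed


lemma GL: "1 \<le> i \<Longrightarrow> i \<le> ar c \<Longrightarrow> graft_list (xs @ c # ys) (arL xs + i) s = xs @ graft c i s # ys"
proof (induction xs)
  case Nil
  then show ?case by simp
next
  case (Cons x xs)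
  have "\<not> ar x + arL xs + i \<le> ar x" using Cons.prems by simp
  then show ?case using Cons by simp
qed

lemma GL_leaf: "graft_list (xs @ Leaf # ys) (arL xs + 1) s = xs @ s # ys"
  using GL[of 1 Leaf xs ys s] by simp

lemma wf_Node_iff: "wf_tree (Node m ts) \<longleftrightarrow> 2 \<le> m \<and> length ts = m \<and> (\<forall>t\<in>set ts. wf_tree t)"
  by simp

lemma qrel_cong1:
  assumes "qrel u u'" "wf_tree (Node m (xs @ u # ys))"
  shows "qrel (Node m (xs @ u # ys)) (Node m (xs @ u' # ys))"
proof -
  let ?T = "Node m (xs @ Leaf # ys)"
  have w: "wf_tree ?T" using assms(2) by auto
  have r: "qrel ?T ?T" using w by (rule qrel.refl)
  have "1 \<le> arL xs + 1" "arL xs + 1 \<le> ar ?T" by simp_all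
  then have "qrel (graft ?T (arL xs + 1) u) (graft ?T (arL xs + 1) u')"
    using qrel.comp[OF r assms(1)] by blast
  then show ?thesis using GL_leaf[of xs ys u] GL_leaf[of xs ys u'] by simp
qed

lemma qrel_cong_list:
  "list_all2 qrel ts us \<Longrightarrow> wf_tree (Node m (xs @ ts)) \<Longrightarrow> qrel (Node m (xs @ ts)) (Node m (xs @ us))"
proof (induction ts us arbitrary: xs rule: list_all2_induct)
  case Nil
  then show ?case using qrel.refl by simp
next
  case (Cons t ts u us)
  have q1: "qrel (Node m (xs @ t # ts)) (Node m (xs @ u # ts))"
    by (rule qrel_cong1[OF Cons(1) Cons.prems])
  have "wf_tree u" using qrel_inv[OF Cons(1)] by simp
  then have "wf_tree (Node m ((xs @ [u]) @ ts))" using Cons.prems by auto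
  then have q2: "qrel (Node m ((xs @ [u]) @ ts)) (Node m ((xs @ [u]) @ us))" using Cons.IH by blast
  show ?case using qrel.trans[OF q1] q2 by simp
qed

fun plug :: "ftree \<Rightarrow> nat \<Rightarrow> ftree list \<Rightarrow> ftree" where
  "plug T i [] = T"
| "plug T i (s # ss) = plug (graft T i s) (i + ar s) ss"

lemma qrel_plug:
  "qrel T1 T2 \<Longrightarrow> \<forall>s\<in>set ss. wf_tree s \<Longrightarrow> 1 \<le> i \<Longrightarrow> i + length ss \<le> ar T1 + 1 \<Longrightarrow>
   qrel (plug T1 i ss) (plug T2 i ss)"
proof (induction ss arbitrary: T1 T2 i)
  case Nil
  then show ?case by simp
next
  case (Cons s ss)
  have ws: "wf_tree s" using Cons.prems by simp
  have ia: "i \<le> ar T1" using Cons.prems by simp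
  have q: "qrel (graft T1 i s) (graft T2 i s)"
    using qrel.comp[OF Cons.prems(1) qrel.refl[OF ws] Cons.prems(3) ia] .
  have "ar (graft T1 i s) = ar T1 + ar s - 1" using ar_graft[OF Cons.prems(3) ia] .
  moreover have "1 \<le> ar s" using ws by (rule ar_pos)
  ultimately have "i + ar s + length ss \<le> ar (graft T1 i s) + 1" using Cons.prems(4) by simp
  then show ?case using Cons.IH[OF q] Cons.prems by simp
qed

lemma plug_leaves:
  "plug (Node m (xs @ replicate (length ss) Leaf @ ys)) (arL xs + 1) ss = Node m (xs @ ss @ ys)"
proof (induction ss arbitrary: xs)
  case Nil
  then show ?case by simp
next
  case (Cons s ss)
  have "graft (Node m (xs @ replicate (length (s # ss)) Leaf @ ys)) (arL xs + 1) s
      = Node m ((xs @ [s]) @ replicate (length ss) Leaf @ ys)"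
    using GL_leaf[of xs "replicate (length ss) Leaf @ ys" s] by simp
  moreover have "arL xs + 1 + ar s = arL (xs @ [s]) + 1" by simp
  ultimately show ?case using Cons.IH[of "xs @ [s]"] by simp
qed

lemma plug_inner:
  "1 \<le> i \<Longrightarrow> i + length ss \<le> ar c + 1 \<Longrightarrow>
   plug (Node m (xs @ c # ys)) (arL xs + i) ss = Node m (xs @ plug c i ss # ys)"
proof (induction ss arbitrary: c i)
  case Nil
  then show ?case by simp
next
  case (Cons s ss)
  have ia: "i \<le> ar c" using Cons.prems by simp
  have g: "graft (Node m (xs @ c # ys)) (arL xs + i) s = Node m (xs @ graft c i s # ys)"
    using GL[OF Cons.prems(1) ia] by simp
  have "ar (graft c i s) = ar c + ar s - 1" using ar_graft[OF Cons.prems(1) ia] .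
  then have b: "i + ar s + length ss \<le> ar (graft c i s) + 1" using Cons.prems by simp
  have "plug (Node m (xs @ c # ys)) (arL xs + i) (s # ss)
      = plug (Node m (xs @ graft c i s # ys)) (arL xs + (i + ar s)) ss"
    using g by (simp add: add.assoc)
  also have "\<dots> = Node m (xs @ plug (graft c i s) (i + ar s) ss # ys)"
    using Cons.IH[OF _ b] Cons.prems(1) by simp
  finally show ?case by simp
qed

lemma plug_append: "plug T i (ss1 @ ss2) = plug (plug T i ss1) (i + arL ss1) ss2"
  by (induction ss1 arbitrary: T i) (auto simp: add.assoc)

lemma qgen_leaves: "qgen n = Node n ([] @ replicate n Leaf @ [])"
  by (simp add: qgen_def)

lemma rotation:
  assumes k: "2 \<le> k" and n: "2 \<le> n" and la: "length as = k - 1" and lb: "length bs = n - 1"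
    and w: "\<forall>t\<in>set as. wf_tree t" "wf_tree b" "\<forall>t\<in>set bs. wf_tree t"
  shows "qrel (Node n (Node k (as @ [b]) # bs)) (Node k (as @ [Node n (b # bs)]))"
proof -
  let ?A0 = "graft (qgen n) 1 (qgen k)"
  let ?B0 = "graft (qgen k) k (qgen n)"
  have A0: "?A0 = Node n ([] @ qgen k # replicate (n - 1) Leaf)"
  proof -
    have "replicate n Leaf = [] @ Leaf # replicate (n - 1) Leaf" using n by (cases n) auto
    then show ?thesis unfolding qgen_def using GL_leaf[of "[]" "replicate (n - 1) Leaf" "qgen k"]
      by (simp add: qgen_def)
  qed
  have B0: "?B0 = Node k (replicate (k - 1) Leaf @ [qgen n])"
  proof -
    have "replicate k Leaf = replicate (k - 1) Leaf @ Leaf # []" using k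
      by (metis One_nat_def Suc_diff_le diff_Suc_1 le_trans one_le_numeral replicate_Suc replicate_append_same)
    moreover have "arL (replicate (k - 1) Leaf) + 1 = k" using k by (simp add: map_replicate_const sum_list_replicate)
    ultimately show ?thesis unfolding qgen_def using GL_leaf[of "replicate (k - 1) Leaf" "[]" "Node n (replicate n Leaf)"]
      by (simp add: qgen_def)
  qed
  have q0: "qrel ?B0 ?A0" using qrel.gen[OF k n] .
  let ?zs = "as @ b # bs"
  have wz: "\<forall>s\<in>set ?zs. wf_tree s" using w by auto
  have arB0: "ar ?B0 = k + n - 1" using ar_graft[of k "qgen k" "qgen n"] k by simp
  have lz: "length ?zs = k + n - 1" using la lb k n by simp
  have q1: "qrel (plug ?B0 1 ?zs) (plug ?A0 1 ?zs)"
    using qrel_plug[OF q0 wz] arB0 lz by simp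
  have arqn: "ar (qgen n) = n" by simp
  have pB: "plug ?B0 1 ?zs = Node k (as @ [Node n (b # bs)])"
  proof -
    have "plug ?B0 1 as = Node k (as @ [qgen n])"
      using plug_leaves[of k "[]" as "[qgen n]"] B0 la by simp
    moreover have "plug (Node k (as @ [qgen n])) (arL as + 1) (b # bs) = Node k (as @ [plug (qgen n) 1 (b # bs)])"
      using plug_inner[of 1 "b # bs" "qgen n" k as "[]"] lb n by simp
    moreover have "plug (qgen n) 1 (b # bs) = Node n (b # bs)"
      using plug_leaves[of n "[]" "b # bs" "[]"] lb n by (simp add: qgen_def)
    ultimately show ?thesis using plug_append[of ?B0 1 as "b # bs"] by (simp add: add.commute)
  qed
  have pA: "plug ?A0 1 ?zs = Node n (Node k (as @ [b]) # bs)"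
  proof -
    have "plug (qgen k) 1 (as @ [b]) = Node k (as @ [b])"
      using plug_leaves[of k "[]" "as @ [b]" "[]"] la k by (simp add: qgen_def)
    moreover have "plug ?A0 1 (as @ [b]) = Node n (plug (qgen k) 1 (as @ [b]) # replicate (n - 1) Leaf)"
      using A0 plug_inner[of 1 "as @ [b]" "qgen k" n "[]" "replicate (n - 1) Leaf"] la k by simp
    moreover have "plug (Node n ([Node k (as @ [b])] @ replicate (length bs) Leaf @ [])) (arL [Node k (as @ [b])] + 1) bs
        = Node n ([Node k (as @ [b])] @ bs @ [])"
      by (rule plug_leaves)
    ultimately show ?thesis using plug_append[of ?A0 1 "as @ [b]" bs] lb by (simp add: add.commute)
  qed
  show ?thesis using qrel.sym[OF q1] pA pB by simp
qed


fun nf :: "ftree \<Rightarrow> bool" where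
  "nf Leaf = True"
| "nf (Node n ts) = (ts \<noteq> [] \<and> hd ts = Leaf \<and> (\<forall>t\<in>set ts. nf t))"

lemma choose_list: "\<forall>t\<in>set ts. \<exists>u. P t u \<Longrightarrow> \<exists>us. list_all2 P ts us"
proof (induction ts)
  case Nil
  then show ?case by simp
next
  case (Cons t ts)
  then obtain u us where "P t u" "list_all2 P ts us" by auto
  then show ?case by (intro exI[of _ "u # us"]) simp
qed

lemma normalize: "wf_tree t \<Longrightarrow> \<exists>u. nf u \<and> qrel t u \<and> nn u = nn t"
proof (induction "nn t" arbitrary: t rule: less_induct)
  case less
  show ?case
  proof (cases t)
    case Leaf
    have "qrel Leaf Leaf" using qrel.refl[of Leaf] by simp
    then show ?thesis using Leaf by (intro exI[of _ Leaf]) simp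
  next
    case (Node m ts)
    have wt: "wf_tree (Node m ts)" using less.prems Node by simp
    have "\<forall>c\<in>set ts. \<exists>u. nf u \<and> qrel c u \<and> nn u = nn c"
    proof
      fix c assume c: "c \<in> set ts"
      have "nn c \<le> sum_list (map nn ts)" using c by (simp add: member_le_sum_list)
      then have "nn c < nn t" using Node by simp
      moreover have "wf_tree c" using wt c by simp
      ultimately show "\<exists>u. nf u \<and> qrel c u \<and> nn u = nn c" by (rule less.hyps)
    qed
    from choose_list[OF this] obtain us where us: "list_all2 (\<lambda>c u. nf u \<and> qrel c u \<and> nn u = nn c) ts us"
      by (elim exE)
    have lq: "list_all2 qrel ts us" using us by (rule list_all2_mono) auto
    have q1: "qrel (Node m ts) (Node m us)" using qrel_cong_list[OF lq, of m "[]"] wt by simp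
    have nnus: "sum_list (map nn us) = sum_list (map nn ts)"
      using us by (induction rule: list_all2_induct) auto
    have nfus: "\<forall>u\<in>set us. nf u" using us by (induction rule: list_all2_induct) auto
    have wus: "wf_tree (Node m us)" using qrel_inv[OF q1] by simp
    have lus: "length us = m" "2 \<le> m" using wus by auto
    then obtain h rest where hr: "us = h # rest" by (cases us) auto
    show ?thesis
    proof (cases "h = Leaf")
      case True
      then have "nf (Node m us)" using hr nfus by simp
      then show ?thesis using q1 nnus Node by (intro exI[of _ "Node m us"]) simp
    next
      case False
      then obtain k vs where h: "h = Node k vs" by (cases h) auto
      have wh: "wf_tree (Node k vs)" using wus hr h by simp
      have nfh: "vs \<noteq> []" "hd vs = Leaf" "\<forall>v\<in>set vs. nf v" using nfus hr h by auto
      have lvs: "length vs = k" "2 \<le> k" using wh by auto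
      define as where "as = butlast vs"
      define b where "b = last vs"
      have vs: "vs = as @ [b]" using nfh(1) by (simp add: as_def b_def)
      have las: "length as = k - 1" using lvs by (simp add: as_def)
      have asne: "as \<noteq> []" using las lvs by auto
      have hdas: "hd as = Leaf" using nfh(2) vs asne by simp
      have wvs: "\<forall>t\<in>set as. wf_tree t" "wf_tree b" using wh vs by auto
      have wrest: "\<forall>t\<in>set rest. wf_tree t" "length rest = m - 1" using wus hr by auto
      have q2: "qrel (Node m (Node k (as @ [b]) # rest)) (Node k (as @ [Node m (b # rest)]))"
        by (rule rotation[OF lvs(2) lus(2) las wrest(2) wvs wrest(1)])
      have wbr: "wf_tree (Node m (b # rest))" using wvs wrest lus by auto
      have "nn (Node m (b # rest)) < nn t"
      proof -
        have "nn (Node m (b # rest)) < nn (Node m us)" using hr h vs by simp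
        then show ?thesis using nnus Node by simp
      qed
      then have "\<exists>w. nf w \<and> qrel (Node m (b # rest)) w \<and> nn w = nn (Node m (b # rest))"
        using wbr by (rule less.hyps)
      then obtain w where w: "nf w" "qrel (Node m (b # rest)) w" "nn w = nn (Node m (b # rest))"
        by blast
      have wk: "wf_tree (Node k (as @ [Node m (b # rest)]))" using wvs wbr lvs las by auto
      have q3: "qrel (Node k (as @ [Node m (b # rest)])) (Node k (as @ [w]))"
        using qrel_cong1[OF w(2), of k as "[]"] wk by simp
      have nfu: "nf (Node k (as @ [w]))" using asne hdas w(1) nfh(3) vs by auto
      have nnu: "nn (Node k (as @ [w])) = nn t" using w(3) hr h vs nnus Node by simp
      have q2': "qrel (Node m us) (Node k (as @ [Node m (b # rest)]))"
        using q2 unfolding hr h vs .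
      have "qrel t (Node k (as @ [w]))"
        unfolding Node by (rule qrel.trans[OF q1 qrel.trans[OF q2' q3]])
      then show ?thesis using nfu nnu by blast
    qed
  qed
qed


lemma sh_inj: "sh a X = sh a Y \<Longrightarrow> X = Y"
proof -
  assume e: "sh a X = sh a Y"
  have i1: "inj (\<lambda>x::nat. x + a)" by (simp add: inj_def)
  have "inj_on ((`) (\<lambda>x::nat. x + a)) UNIV"
    by (rule inj_on_image) (use i1 in \<open>simp add: inj_on_def\<close>)
  then show "X = Y" using e unfolding sh_def by (simp add: inj_image_eq_iff)
qed

lemma add_img_inj: "(\<lambda>x::nat. x + a) ` X = (\<lambda>x. x + a) ` Y \<Longrightarrow> X = Y"
  by (simp add: inj_image_eq_iff inj_def)

lemma kids_wf_inv:
  assumes "\<forall>t\<in>set ts. wf_tree t"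
  shows "partition_on ({1..<arL ts} - rootset ts) (kids ts)"
proof -
  have "\<forall>t\<in>set ts. phi t \<in> NCP (ar t) \<and> 1 \<le> ar t" using assms phi_NCP ar_pos by blast
  then show ?thesis using list_inv by blast
qed

lemma kids_ne: "\<forall>t\<in>set ts. wf_tree t \<Longrightarrow> B \<in> kids ts \<Longrightarrow> B \<noteq> {}"
  using kids_wf_inv partition_onD3 by blast

lemma phi_ne: "wf_tree t \<Longrightarrow> B \<in> phi t \<Longrightarrow> B \<noteq> {}"
  using phi_NCP[of t] ar_pos[of t] NCP_D partition_onD3 by blast

lemma lo_part:
  assumes "wf_tree u" "\<forall>t\<in>set us. wf_tree t"
  shows "{B \<in> kids (u # us). \<forall>x\<in>B. x < ar u} = phi u"
proof (rule set_eqI, rule iffI)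
  fix B assume B: "B \<in> {B \<in> kids (u # us). \<forall>x\<in>B. x < ar u}"
  show "B \<in> phi u"
  proof (rule ccontr)
    assume "B \<notin> phi u"
    then obtain C where C: "C \<in> kids us" "B = (\<lambda>x. x + ar u) ` C" using B by (auto simp: sh_def)
    obtain x where "x \<in> C" using kids_ne[OF assms(2) C(1)] by blast
    then have "x + ar u \<in> B" "x + ar u \<ge> ar u" using C by auto
    then show False using B by auto
  qed
next
  fix B assume B: "B \<in> phi u"
  then show "B \<in> {B \<in> kids (u # us). \<forall>x\<in>B. x < ar u}" using phi_bound[OF assms(1)] by auto
qed

lemma hi_part:
  assumes "wf_tree u" "\<forall>t\<in>set us. wf_tree t"
  shows "{B \<in> kids (u # us). \<forall>x\<in>B. ar u < x} = sh (ar u) (kids us)"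
proof (rule set_eqI, rule iffI)
  fix B assume B: "B \<in> {B \<in> kids (u # us). \<forall>x\<in>B. ar u < x}"
  show "B \<in> sh (ar u) (kids us)"
  proof (rule ccontr)
    assume "B \<notin> sh (ar u) (kids us)"
    then have "B \<in> phi u" using B by auto
    moreover obtain x where "x \<in> B" using phi_ne[OF assms(1)] \<open>B \<in> phi u\<close> by blast
    ultimately have "x < ar u" using phi_bound[OF assms(1)] by blast
    then show False using B \<open>x \<in> B\<close> by auto
  qed
next
  fix B assume B: "B \<in> sh (ar u) (kids us)"
  then obtain C where C: "C \<in> kids us" "B = (\<lambda>x. x + ar u) ` C" by (auto simp: sh_def)
  have "\<forall>x\<in>C. 1 \<le> x" using kids_bound[OF assms(2) C(1)] by blast
  then show "B \<in> {B \<in> kids (u # us). \<forall>x\<in>B. ar u < x}" using B C by auto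
qed

lemma list_inj:
  assumes "\<forall>t\<in>set ts. wf_tree t" "\<forall>t\<in>set ts'. wf_tree t \<and> nf t"
    and "\<forall>t\<in>set ts. \<forall>t'. wf_tree t' \<and> nf t' \<and> ar t = ar t' \<and> phi t = phi t' \<longrightarrow> t = t'"
    and "arL ts = arL ts'" "rootset ts = rootset ts'" "kids ts = kids ts'"
  shows "ts = ts'"
  using assms
proof (induction ts arbitrary: ts')
  case Nil
  then show ?case
  proof (cases ts')
    case (Cons u' us')
    then have "1 \<le> ar u'" using Nil.prems(2) ar_pos by auto
    then show ?thesis using Nil.prems(4) Cons by simp
  qed simp
next
  case (Cons u us)
  have wu: "wf_tree u" "\<forall>t\<in>set us. wf_tree t" using Cons.prems(1) by auto
  have au: "1 \<le> ar u" using wu(1) by (rule ar_pos)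
  obtain u' us' where ts': "ts' = u' # us'"
    using Cons.prems(4) au by (cases ts') auto
  have wu': "wf_tree u'" "nf u'" "\<forall>t\<in>set us'. wf_tree t \<and> nf t" using Cons.prems(2) ts' by auto
  have au': "1 \<le> ar u'" using wu'(1) by (rule ar_pos)
  have ge1: "\<forall>x\<in>rootset us. 1 \<le> x" using rootset_sub[of us] wu(2) ar_pos by fastforce
  have ge1': "\<forall>x\<in>rootset us'. 1 \<le> x" using rootset_sub[of us'] wu'(3) ar_pos by fastforce
  show ?case
  proof (cases "us = []")
    case True
    have us': "us' = []"
    proof (rule ccontr)
      assume "us' \<noteq> []"
      then have "rootset ts' \<noteq> {}" using ts' rootset_Cons by simp
      then show False using Cons.prems(5) True by simp
    qed
    have "ar u = ar u'" using Cons.prems(4) True us' ts' by simp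
    moreover have "phi u = phi u'" using Cons.prems(6) True us' ts' by simp
    ultimately have "u = u'" using Cons.prems(3) wu' by simp
    then show ?thesis using True us' ts' by simp
  next
    case False
    have us': "us' \<noteq> []"
    proof
      assume "us' = []"
      then have "rootset ts' = {}" using ts' by simp
      then show False using Cons.prems(5) False rootset_Cons by simp
    qed
    let ?R = "rootset (u # us)"
    have R1: "?R = insert (ar u) ((\<lambda>x. x + ar u) ` rootset us)" using rootset_Cons[OF False] .
    have R2: "?R = insert (ar u') ((\<lambda>x. x + ar u') ` rootset us')"
      using rootset_Cons[OF us'] Cons.prems(5) ts' by simp
    have "ar u' \<in> ?R" using R2 by simp
    then have "ar u' \<in> insert (ar u) ((\<lambda>x. x + ar u) ` rootset us)" using R1 by simp
    then have "ar u \<le> ar u'" by auto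
    moreover have "ar u \<in> ?R" using R1 by simp
    then have "ar u \<in> insert (ar u') ((\<lambda>x. x + ar u') ` rootset us')" using R2 by simp
    then have "ar u' \<le> ar u" by auto
    ultimately have aeq: "ar u = ar u'" by simp
    have "(\<lambda>x. x + ar u) ` rootset us = ?R - {ar u}" using R1 ge1 by auto
    moreover have "(\<lambda>x. x + ar u) ` rootset us' = ?R - {ar u}" using R2 ge1' aeq by auto
    ultimately have req: "rootset us = rootset us'" using add_img_inj by metis
    have leq: "arL us = arL us'" using Cons.prems(4) ts' aeq by simp
    have kk: "kids (u # us) = kids (u' # us')" using Cons.prems(6) unfolding ts' .
    have wus': "\<forall>t\<in>set us'. wf_tree t" using wu'(3) by simp
    have "phi u = {B \<in> kids (u # us). \<forall>x\<in>B. x < ar u}" using lo_part[OF wu] by simp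
    also have "\<dots> = {B \<in> kids (u' # us'). \<forall>x\<in>B. x < ar u'}" unfolding kk aeq ..
    also have "\<dots> = phi u'" using lo_part[OF wu'(1) wus'] .
    finally have "phi u = phi u'" .
    then have ueq: "u = u'" using Cons.prems(3) wu' aeq by simp
    have "sh (ar u) (kids us) = {B \<in> kids (u # us). \<forall>x\<in>B. ar u < x}" using hi_part[OF wu] by simp
    also have "\<dots> = {B \<in> kids (u' # us'). \<forall>x\<in>B. ar u' < x}" unfolding kk aeq ..
    also have "\<dots> = sh (ar u) (kids us')" using hi_part[OF wu'(1) wus'] aeq by simp
    finally have "sh (ar u) (kids us) = sh (ar u) (kids us')" .
    then have keq: "kids us = kids us'" by (rule sh_inj)
    have "us = us'"
      using Cons.IH[of us'] wu(2) wu'(3) Cons.prems(3) leq req keq by simp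
    then show ?thesis using ueq ts' by simp
  qed
qed

lemma nf_inj:
  "wf_tree t \<Longrightarrow> nf t \<Longrightarrow> \<forall>t'. wf_tree t' \<and> nf t' \<and> ar t = ar t' \<and> phi t = phi t' \<longrightarrow> t = t'"
proof (induction t)
  case Leaf
  show ?case
  proof (intro allI impI)
    fix t' assume h: "wf_tree t' \<and> nf t' \<and> ar Leaf = ar t' \<and> phi Leaf = phi t'"
    show "Leaf = t'"
    proof (cases t')
      case (Node m' ts')
      then have "2 \<le> ar t'" using h ar_Node_ge2 by blast
      then show ?thesis using h by simp
    qed simp
  qed
next
  case (Node m ts)
  show ?case
  proof (intro allI impI)
    fix t' assume h: "wf_tree t' \<and> nf t' \<and> ar (Node m ts) = ar t' \<and> phi (Node m ts) = phi t'"
    have w: "wf_tree (Node m ts)" "nf (Node m ts)" by fact+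
    have "2 \<le> ar (Node m ts)" using ar_Node_ge2[OF w(1)] .
    then obtain m' ts' where t': "t' = Node m' ts'" using h by (cases t') auto
    have w': "wf_tree (Node m' ts')" "nf (Node m' ts')" using h t' by auto
    obtain ts1 where ts1: "ts = Leaf # ts1" using w(2) by (cases ts) auto
    obtain ts1' where ts1': "ts' = Leaf # ts1'" using w'(2) by (cases ts') auto
    have ne: "ts1 \<noteq> []" "ts1' \<noteq> []" using w(1) w'(1) ts1 ts1' by auto
    have r1: "1 \<in> rootset ts" using rootset_Cons[OF ne(1)] ts1 by simp
    have r1': "1 \<in> rootset ts'" using rootset_Cons[OF ne(2)] ts1' by simp
    have P: "phi (Node m ts) = insert (rootset ts) (kids ts)" using phi_Node[OF w(1)] .
    have P': "phi (Node m' ts') = insert (rootset ts') (kids ts')" using phi_Node[OF w'(1)] .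
    have wts: "\<forall>t\<in>set ts. wf_tree t" "\<forall>t\<in>set ts'. wf_tree t" using w(1) w'(1) by auto
    have part: "partition_on {1..<ar (Node m ts)} (phi (Node m ts))"
      using NCP_D[OF phi_NCP[OF w(1)]] ar_pos[OF w(1)] by blast
    have disj: "disjoint (phi (Node m ts))" using partition_onD2[OF part] .
    have "rootset ts' \<in> phi (Node m ts)" using h t' P' by simp
    moreover have "rootset ts \<in> phi (Node m ts)" using P by simp
    ultimately have req: "rootset ts = rootset ts'"
      using disj r1 r1' unfolding disjoint_def by blast
    have notin: "rootset ts \<notin> kids ts"
    proof
      assume "rootset ts \<in> kids ts"
      then have "1 \<in> \<Union>(kids ts)" using r1 by blast
      then show False using partition_onD1[OF kids_wf_inv[OF wts(1)]] r1 by auto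
    qed
    have notin': "rootset ts' \<notin> kids ts'"
    proof
      assume "rootset ts' \<in> kids ts'"
      then have "1 \<in> \<Union>(kids ts')" using r1' by blast
      then show False using partition_onD1[OF kids_wf_inv[OF wts(2)]] r1' by auto
    qed
    have "kids ts = phi (Node m ts) - {rootset ts}" using P notin by auto
    moreover have "kids ts' = phi (Node m ts) - {rootset ts}" using P' notin' h t' req by auto
    ultimately have keq: "kids ts = kids ts'" by simp
    have leq: "arL ts = arL ts'" using h t' by simp
    have IH: "\<forall>t\<in>set ts. \<forall>t'. wf_tree t' \<and> nf t' \<and> ar t = ar t' \<and> phi t = phi t' \<longrightarrow> t = t'"
    proof
      fix c assume c: "c \<in> set ts"
      then have "wf_tree c" "nf c" using w by auto
      then show "\<forall>t'. wf_tree t' \<and> nf t' \<and> ar c = ar t' \<and> phi c = phi t' \<longrightarrow> c = t'"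
        using Node.IH c by blast
    qed
    have "ts = ts'" using list_inj[OF wts(1) _ IH leq req keq] w'(1,2) by auto
    moreover have "m = m'" using w(1) w'(1) calculation by simp
    ultimately show "Node m ts = t'" using t' by simp
  qed
qed

lemma inj_main:
  assumes "wf_tree t" "wf_tree t'" "ar t = ar t'" "phi t = phi t'"
  shows "qrel t t'"
proof -
  obtain u where u: "nf u" "qrel t u" using normalize[OF assms(1)] by blast
  obtain u' where u': "nf u'" "qrel t' u'" using normalize[OF assms(2)] by blast
  note i = qrel_inv[OF u(2)] qrel_inv[OF u'(2)]
  have "phi u = phi u'" using phi_qrel[OF u(2)] phi_qrel[OF u'(2)] assms(4) by simp
  moreover have "ar u = ar u'" using i assms(3) by simp
  ultimately have "u = u'" using nf_inj[of u] u(1) u'(1) i by blast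
  then have "qrel t u'" using u(2) by simp
  then show ?thesis using qrel.sym[OF u'(2)] by (rule qrel.trans)
qed


lemma NCP_image:
  assumes part: "partition_on A Q" and nc: "noncrossing Q"
    and mono: "\<forall>x\<in>A. \<forall>y\<in>A. x < y \<longrightarrow> f x < f y"
    and img: "f ` A = {1..<m}" and m: "1 \<le> m"
  shows "(`) f ` Q \<in> NCP m"
proof -
  have refl: "\<And>x y. x \<in> A \<Longrightarrow> y \<in> A \<Longrightarrow> f x < f y \<Longrightarrow> x < y"
    using mono by (metis less_asym nat_neq_iff)
  have inj: "inj_on f A" unfolding inj_on_def using mono by (metis nat_neq_iff)
  have p1: "partition_on (f ` A) ((`) f ` Q - {{}})" by (rule partition_on_inj_image[OF part inj])
  have "(`) f ` Q - {{}} = (`) f ` Q" using partition_onD3[OF part] by auto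
  then have p2: "partition_on {1..<m} ((`) f ` Q)" using p1 img by simp
  have sub: "\<And>B. B \<in> Q \<Longrightarrow> B \<subseteq> A" using partition_onD1[OF part] by blast
  have n2: "noncrossing ((`) f ` Q)"
  proof (rule ncI)
    fix X Y a b c d assume X: "X \<in> (`) f ` Q" and Y: "Y \<in> (`) f ` Q" and ne: "X \<noteq> Y"
      and abcd: "a < c" "c < b" "b < d" "a \<in> X" "b \<in> X" "c \<in> Y" "d \<in> Y"
    obtain B where B: "B \<in> Q" "X = f ` B" using X by blast
    obtain C where C: "C \<in> Q" "Y = f ` C" using Y by blast
    have BC: "B \<noteq> C" using ne B C by auto
    obtain a' where a': "a' \<in> B" "a = f a'" using abcd(4) B by blast
    obtain b' where b': "b' \<in> B" "b = f b'" using abcd(5) B by blast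
    obtain c' where c': "c' \<in> C" "c = f c'" using abcd(6) C by blast
    obtain d' where d': "d' \<in> C" "d = f d'" using abcd(7) C by blast
    have inA: "a' \<in> A" "b' \<in> A" "c' \<in> A" "d' \<in> A" using sub B(1) C(1) a' b' c' d' by auto
    have "a' < c'" using refl[OF inA(1) inA(3)] abcd(1) a' c' by simp
    moreover have "c' < b'" using refl[OF inA(3) inA(2)] abcd(2) b' c' by simp
    moreover have "b' < d'" using refl[OF inA(2) inA(4)] abcd(3) b' d' by simp
    ultimately show False using ncD[OF nc B(1) C(1) BC] a'(1) b'(1) c'(1) d'(1) by blast
  qed
  show ?thesis unfolding NCP_def ivl_eq using p2 n2 m by simp
qed

lemma noncrossing_subset: "noncrossing P \<Longrightarrow> Q \<subseteq> P \<Longrightarrow> noncrossing Q"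
  by (rule ncI) (meson ncD subsetD)

lemma partition_sub:
  assumes "partition_on A P" "\<forall>C\<in>P. C \<subseteq> G \<or> C \<inter> G = {}"
  shows "partition_on (A \<inter> G) {C \<in> P. C \<subseteq> G}" "partition_on (A - G) {C \<in> P. C \<inter> G = {}}"
proof -
  have U: "A = \<Union>P" using partition_onD1[OF assms(1)] .
  have d: "disjoint P" using partition_onD2[OF assms(1)] .
  have e: "{} \<notin> P" using partition_onD3[OF assms(1)] .
  show "partition_on (A \<inter> G) {C \<in> P. C \<subseteq> G}"
  proof (rule partition_onI)
    show "\<Union>{C \<in> P. C \<subseteq> G} = A \<inter> G" using U assms(2) by blast
    show "\<And>p q. p \<in> {C \<in> P. C \<subseteq> G} \<Longrightarrow> q \<in> {C \<in> P. C \<subseteq> G} \<Longrightarrow> p \<noteq> q \<Longrightarrow> disjnt p q"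
      using d by (auto simp: pairwise_def)
    show "{} \<notin> {C \<in> P. C \<subseteq> G}" using e by blast
  qed
  show "partition_on (A - G) {C \<in> P. C \<inter> G = {}}"
  proof (rule partition_onI)
    show "\<Union>{C \<in> P. C \<inter> G = {}} = A - G" using U assms(2) e by blast
    show "\<And>p q. p \<in> {C \<in> P. C \<inter> G = {}} \<Longrightarrow> q \<in> {C \<in> P. C \<inter> G = {}} \<Longrightarrow> p \<noteq> q \<Longrightarrow> disjnt p q"
      using d by (auto simp: pairwise_def)
    show "{} \<notin> {C \<in> P. C \<inter> G = {}}" using e by blast
  qed
qed

lemma decomp:
  assumes part: "partition_on {1..<n} P" and nc: "noncrossing P"
    and c: "2 \<le> c" "c < e" "e \<le> n"
    and blocks: "\<forall>C\<in>P. C \<subseteq> {c..<e} \<or> C \<inter> {c..<e} = {}"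
  shows "\<exists>P1 P2. P1 \<in> NCP (n - (e - c)) \<and> P2 \<in> NCP (e - c + 1) \<and> P = ncp_comp P1 c (e - c + 1) P2"
proof -
  let ?G = "{c..<e}" let ?g = "e - c"
  let ?PA = "{C \<in> P. C \<inter> ?G = {}}" let ?PB = "{C \<in> P. C \<subseteq> ?G}"
  define f where "f p = (if p < c then p else p - ?g)" for p
  define h where "h x = x - (c - 1)" for x
  have pA: "partition_on ({1..<n} - ?G) ?PA" using partition_sub[OF part blocks] by simp
  have pB: "partition_on ?G ?PB"
  proof -
    have "{1..<n} \<inter> ?G = ?G" using c by auto
    then show ?thesis using partition_sub[OF part blocks] by simp
  qed
  have ncA: "noncrossing ?PA" by (rule noncrossing_subset[OF nc]) blast
  have ncB: "noncrossing ?PB" by (rule noncrossing_subset[OF nc]) blast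
  have fmono: "\<forall>x\<in>{1..<n} - ?G. \<forall>y\<in>{1..<n} - ?G. x < y \<longrightarrow> f x < f y"
    unfolding f_def using c by auto
  have fimg: "f ` ({1..<n} - ?G) = {1..<n - ?g}"
  proof (rule set_eqI, rule iffI)
    fix y assume "y \<in> f ` ({1..<n} - ?G)"
    then obtain x where x: "x \<in> {1..<n} - ?G" "y = f x" by blast
    then show "y \<in> {1..<n - ?g}" unfolding f_def using c by auto
  next
    fix y assume y: "y \<in> {1..<n - ?g}"
    show "y \<in> f ` ({1..<n} - ?G)"
    proof (cases "y < c")
      case True
      then show ?thesis using y c unfolding f_def by (intro image_eqI[of _ _ y]) auto
    next
      case False
      then show ?thesis using y c unfolding f_def by (intro image_eqI[of _ _ "y + ?g"]) auto
    qed
  qed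
  have hmono: "\<forall>x\<in>?G. \<forall>y\<in>?G. x < y \<longrightarrow> h x < h y" unfolding h_def using c by auto
  have himg: "h ` ?G = {1..<?g + 1}"
  proof (rule set_eqI, rule iffI)
    fix y assume "y \<in> h ` ?G"
    then show "y \<in> {1..<?g + 1}" unfolding h_def using c by auto
  next
    fix y assume y: "y \<in> {1..<?g + 1}"
    then show "y \<in> h ` ?G" unfolding h_def using c by (intro image_eqI[of _ _ "y + (c - 1)"]) auto
  qed
  have P1: "(`) f ` ?PA \<in> NCP (n - ?g)"
    by (rule NCP_image[OF pA ncA fmono fimg]) (use c in simp)
  have P2: "(`) h ` ?PB \<in> NCP (?g + 1)"
    by (rule NCP_image[OF pB ncB hmono himg]) simp
  have subP: "\<And>C. C \<in> P \<Longrightarrow> C \<subseteq> {1..<n}" using partition_onD1[OF part] by blast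
  have e1: "(`) (chi c (?g + 1)) ` (`) f ` ?PA = ?PA"
  proof -
    have "(`) (chi c (?g + 1)) ` (`) f ` ?PA = (\<lambda>B. (\<lambda>x. chi c (?g + 1) (f x)) ` B) ` ?PA"
      by (simp add: image_image)
    also have "\<dots> = (\<lambda>B. id ` B) ` ?PA"
    proof (rule img_cong2)
      fix B x assume B: "B \<in> ?PA" and x: "x \<in> B"
      have "B \<subseteq> {1..<n}" using subP B by simp
      then have "x \<notin> ?G" "x \<in> {1..<n}" using B x by auto
      then show "chi c (?g + 1) (f x) = id x" unfolding chi_def f_def using c by auto
    qed
    finally show ?thesis by simp
  qed
  have e2: "sh (c - 1) ((`) h ` ?PB) = ?PB"
  proof -
    have "sh (c - 1) ((`) h ` ?PB) = (\<lambda>B. (\<lambda>x. h x + (c - 1)) ` B) ` ?PB"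
      by (simp add: sh_def image_image)
    also have "\<dots> = (\<lambda>B. id ` B) ` ?PB"
    proof (rule img_cong2)
      fix B x assume B: "B \<in> ?PB" and x: "x \<in> B"
      then have "x \<in> ?G" by auto
      then show "h x + (c - 1) = id x" unfolding h_def using c by auto
    qed
    finally show ?thesis by simp
  qed
  have "ncp_comp ((`) f ` ?PA) c (?g + 1) ((`) h ` ?PB) = ?PA \<union> ?PB"
    using ncp_comp_alt[of c] c e1 e2 by simp
  also have "\<dots> = P" using blocks by blast
  finally have "P = ncp_comp ((`) f ` ?PA) c (?g + 1) ((`) h ` ?PB)" by simp
  then show ?thesis using P1 P2 by blast
qed


lemma surj: "P \<in> NCP n \<Longrightarrow> \<exists>t. wf_tree t \<and> ar t = n \<and> phi t = P"
proof (induction n arbitrary: P rule: less_induct)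
  case (less n)
  have n0: "n \<noteq> 0"
  proof
    assume "n = 0"
    then show False using less.prems unfolding NCP_def by simp
  qed
  have pn: "partition_on {1..<n} P" "noncrossing P" using NCP_D[OF less.prems] n0 by auto
  show ?case
  proof (cases "n = 1")
    case True
    then have "P = {}" using pn(1) by (simp add: partition_on_empty)
    then show ?thesis using True by (intro exI[of _ Leaf]) simp
  next
    case False
    then have n2: "2 \<le> n" using n0 by simp
    have U: "\<Union>P = {1..<n}" using partition_onD1[OF pn(1)] by simp
    have disj: "disjoint P" using partition_onD2[OF pn(1)] .
    have dis: "\<And>B C x. B \<in> P \<Longrightarrow> C \<in> P \<Longrightarrow> B \<noteq> C \<Longrightarrow> x \<in> B \<Longrightarrow> x \<in> C \<Longrightarrow> False"
      using disj unfolding disjoint_def by blast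
    have subP: "\<And>C. C \<in> P \<Longrightarrow> C \<subseteq> {1..<n}" using U by blast
    have "1 \<in> \<Union>P" using U n2 by simp
    then obtain B where B: "B \<in> P" "1 \<in> B" by blast
    show ?thesis
    proof (cases "B = {1..<n}")
      case True
      have "P = {{1..<n}}"
      proof (rule set_eqI, rule iffI)
        fix C assume C: "C \<in> P"
        have "C \<noteq> {}" using partition_onD3[OF pn(1)] C by auto
        then obtain x where x: "x \<in> C" by blast
        then have "x \<in> B" using subP[OF C] True by auto
        then have "C = B" using dis[OF C B(1) _ x] by blast
        then show "C \<in> {{1..<n}}" using True by simp
      next
        fix C assume "C \<in> {{1..<n}}"
        then show "C \<in> P" using True B by simp
      qed
      then have "phi (qgen n) = P" using phi_qgen[OF n2] pgen_alt by simp
      then show ?thesis using wf_qgen[OF n2] by (intro exI[of _ "qgen n"]) simp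
    next
      case False
      then have "\<exists>y. y \<in> {1..<n} \<and> y \<notin> B" using subP[OF B(1)] by blast
      define c where "c = (LEAST y. y \<in> {1..<n} \<and> y \<notin> B)"
      have c1: "c \<in> {1..<n}" "c \<notin> B" using LeastI_ex[OF \<open>\<exists>y. _\<close>] unfolding c_def by auto
      have c2: "\<And>y. 1 \<le> y \<Longrightarrow> y < c \<Longrightarrow> y \<in> B"
      proof -
        fix y assume "1 \<le> y" "y < c"
        then have "y \<in> {1..<n}" using c1 by auto
        moreover have "\<not> (y \<in> {1..<n} \<and> y \<notin> B)" using not_less_Least[of y] \<open>y < c\<close> unfolding c_def by blast
        ultimately show "y \<in> B" by blast
      qed
      have c3: "2 \<le> c" using c1 B(2) by (cases "c = 1") auto
      define e where "e = (if \<exists>z\<in>B. c < z then (LEAST z. z \<in> B \<and> c < z) else n)"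
      have eprops: "c < e \<and> e \<le> n \<and> (\<forall>z\<in>B. \<not> (c \<le> z \<and> z < e)) \<and> (e < n \<longrightarrow> e \<in> B)"
      proof (cases "\<exists>z\<in>B. c < z")
        case True
        then have ex: "\<exists>z. z \<in> B \<and> c < z" by blast
        have eB: "e \<in> B" "c < e" using LeastI_ex[OF ex] True unfolding e_def by auto
        have "e < n" using eB subP[OF B(1)] by auto
        moreover have "\<forall>z\<in>B. \<not> (c \<le> z \<and> z < e)"
        proof (intro ballI notI)
          fix z assume z: "z \<in> B" "c \<le> z \<and> z < e"
          then have "z \<noteq> c" using c1 by auto
          then have "c < z" using z by simp
          then have "e \<le> z" using Least_le[of "\<lambda>z. z \<in> B \<and> c < z" z] z True unfolding e_def by simp
          then show False using z by simp
        qed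
        ultimately show ?thesis using eB by simp
      next
        case False
        then have "e = n" unfolding e_def by simp
        moreover have "\<forall>z\<in>B. \<not> (c \<le> z \<and> z < e)"
          using False c1 by (metis le_neq_implies_less)
        ultimately show ?thesis using c1 by simp
      qed
      have ce: "c < e" "e \<le> n" using eprops by auto
      have blocks: "\<forall>C\<in>P. C \<subseteq> {c..<e} \<or> C \<inter> {c..<e} = {}"
      proof
        fix C assume C: "C \<in> P"
        show "C \<subseteq> {c..<e} \<or> C \<inter> {c..<e} = {}"
        proof (cases "C = B")
          case True
          then show ?thesis using eprops by auto
        next
          case CB: False
          show ?thesis
          proof (rule ccontr)
            assume "\<not> ?thesis"
            then have "\<exists>x\<in>C. c \<le> x \<and> x < e" "\<exists>y\<in>C. \<not> (c \<le> y \<and> y < e)"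
              by (auto simp: subset_iff)
            then obtain x y where x: "x \<in> C" "c \<le> x" "x < e" and y: "y \<in> C" "\<not> (c \<le> y \<and> y < e)"
              by blast
            have yn: "1 \<le> y" "y < n" using subP[OF C] y(1) by auto
            show False
            proof (cases "y < c")
              case True
              then have "y \<in> B" using c2 yn by simp
              then show False using dis[OF B(1) C _ _ y(1)] CB by blast
            next
              case False
              then have "e \<le> y" using y(2) by simp
              then have en: "e < n" using yn by simp
              then have eB: "e \<in> B" using eprops by simp
              have "e \<noteq> y" using dis[OF B(1) C _ eB] CB y(1) by blast
              then have "e < y" using \<open>e \<le> y\<close> by simp
              moreover have "1 < x" using x c3 by simp
              ultimately show False using ncD[OF pn(2) B(1) C _ _ x(3) _ B(2) eB x(1) y(1)] CB by blast
            qed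
          qed
        qed
      qed
      obtain P1 P2 where P12: "P1 \<in> NCP (n - (e - c))" "P2 \<in> NCP (e - c + 1)"
        "P = ncp_comp P1 c (e - c + 1) P2"
        using decomp[OF pn(1) pn(2) c3 ce blocks] by blast
      have lt1: "n - (e - c) < n" using ce by simp
      have lt2: "e - c + 1 < n" using ce c3 by simp
      obtain t1 where t1: "wf_tree t1" "ar t1 = n - (e - c)" "phi t1 = P1" using less.IH[OF lt1 P12(1)] by blast
      obtain t2 where t2: "wf_tree t2" "ar t2 = e - c + 1" "phi t2 = P2" using less.IH[OF lt2 P12(2)] by blast
      have ic: "1 \<le> c" "c \<le> ar t1" using c3 ce t1(2) by auto
      have "phi (graft t1 c t2) = P" using phi_graft[OF t1(1) t2(1) ic] t1 t2 P12(3) by simp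
      moreover have "ar (graft t1 c t2) = n" using ar_graft[OF ic] t1(2) t2(2) ce by simp
      moreover have "wf_tree (graft t1 c t2)" using wf_graft t1(1) t2(1) by blast
      ultimately show ?thesis by blast
    qed
  qed
qed

theorem mainTheorem1:
  shows "(\<forall>n\<ge>2. phi (qgen n) = pgen n)
    \<and> (\<forall>t. wf_tree t \<longrightarrow> phi t \<in> NCP (ar t))
    \<and> (\<forall>t s i. wf_tree t \<and> wf_tree s \<and> 1 \<le> i \<and> i \<le> ar t \<longrightarrow>
          phi (graft t i s) = ncp_comp (phi t) i (ar s) (phi s))
    \<and> (\<forall>t t'. qrel t t' \<longrightarrow> phi t = phi t')
    \<and> (\<forall>n. \<forall>P\<in>NCP n. \<exists>t. wf_tree t \<and> ar t = n \<and> phi t = P)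
    \<and> (\<forall>t t'. wf_tree t \<and> wf_tree t' \<and> ar t = ar t' \<and> phi t = phi t' \<longrightarrow> qrel t t')"
proof (intro conjI)
  show "\<forall>n\<ge>2. phi (qgen n) = pgen n" using phi_qgen by simp
  show "\<forall>t. wf_tree t \<longrightarrow> phi t \<in> NCP (ar t)" using phi_NCP by simp
  show "\<forall>t s i. wf_tree t \<and> wf_tree s \<and> 1 \<le> i \<and> i \<le> ar t \<longrightarrow>
          phi (graft t i s) = ncp_comp (phi t) i (ar s) (phi s)" using phi_graft by simp
  show "\<forall>t t'. qrel t t' \<longrightarrow> phi t = phi t'" using phi_qrel by simp
  show "\<forall>n. \<forall>P\<in>NCP n. \<exists>t. wf_tree t \<and> ar t = n \<and> phi t = P" using surj by simp
  show "\<forall>t t'. wf_tree t \<and> wf_tree t' \<and> ar t = ar t' \<and> phi t = phi t' \<longrightarrow> qrel t t'"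
    using inj_main by simp
qed

end
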